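(* For $n\ge 2$, every diagram $\mathfrak a\in\mathscr{A}_n$ either lies in (the image under $\epsilon_n$ of) $\mathscr{A}_{n-1}$, or is of the form $\mathfrak a=\mathfrak a'\,\mathfrak x\,\mathfrak b'$ with $\mathfrak a',\mathfrak b'\in\mathscr{A}_{n-1}$ and $\mathfrak x\in\{\mathfrak g_{n-1},\mathfrak e_{n-1},\mathfrak u_n\}$. In particular, $\mathbb{A}_n$ is generated as an algebra by $S_n$, $\mathfrak e_{n-1}$ and $\mathfrak u_n$, and $\mathbb{L}_n$ is generated by $S_n$ and $\mathfrak u_n$.
   Context: Let $K$ be a field, $x$ an element transcendental or algebraic over $K$, $F=K(x)$. $\mathscr{A}_n$ is the set of graphs on $\{1,\dots,n\}\cup\{1',\dots,n'\}$ (top row $1,\dots,n$, bottom row $1',\dots,n'$) in which every vertex has degree $0$ or $1$; degree-$0$ vertices carry loops. Arcs within a row are horizontal, arcs between rows are vertical. Product: stack $\mathfrak a$ above $\mathfrak b$, identifying bottom vertex $i'$ of $\mathfrak a$ with top vertex $i$ of $\mathfrak b$; $\ell(\mathfrak a,\mathfrak b)$ is the number of connected components lying entirely in the middle row, $G'(\mathfrak a,\mathfrak b)$ is the diagram on the outer rows joining two vertices iff they are connected by a path, and $\mathfrak a\mathfrak b=x^{\ell(\mathfrak a,\mathfrak b)}G'(\mathfrak a,\mathfrak b)$; this gives the algebra $\mathbb{A}_n$ with basis $\mathscr{A}_n$, and $\mathbb{L}_n$ is the subalgebra spanned by diagrams without horizontal arcs. $S_n$ is identified with diagrams having $n$ vertical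 arcs. $\epsilon_n\colon\mathbb{A}_{n-1}\to\mathbb{A}_n$ adds the vertices $n,n'$ joined by the vertical arc $(n,n')$. $\mathfrak e_i$ has arcs $(k,k')$ for $k\ne i,i+1$ plus horizontal arcs $(i,i+1)$ and $(i',(i+1)')$; $\mathfrak u_i$ has arcs $(k,k')$ for $k\neq i$ and $i,i'$ isolated; $\mathfrak g_i$ has arcs $(k,k')$ for $k\ne i,i+1$ plus $(i,(i+1)')$ and $(i+1,i')$. *)

theory Defs
  imports Main
begin

text \<open>Vertices: top row T 1..T n, bottom row B 1..B n (B i stands for i').
  A diagram is a set of arcs (two-element vertex sets), pairwise disjoint;
  vertices not covered by an arc are the degree-0 (loop-carrying) vertices.\<close>

datatype vtx = T nat | B nat

type_synonym diagram = "vtx set set"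

definition verts :: "nat \<Rightarrow> vtx set" where
  "verts n = {T i | i. 1 \<le> i \<and> i \<le> n} \<union> {B i | i. 1 \<le> i \<and> i \<le> n}"

definition rb :: "nat \<Rightarrow> diagram set" where
  "rb n = {D. (\<forall>e\<in>D. \<exists>u v. u \<in> verts n \<and> v \<in> verts n \<and> u \<noteq> v \<and> e = {u, v})
              \<and> (\<forall>e\<in>D. \<forall>e'\<in>D. e \<noteq> e' \<longrightarrow> e \<inter> e' = {})}"

definition vertical_arc :: "vtx set \<Rightarrow> bool" where
  "vertical_arc e \<longleftrightarrow> (\<exists>i j. e = {T i, B j})"

definition horizontal_arc :: "vtx set \<Rightarrow> bool" where
  "horizontal_arc e \<longleftrightarrow> (\<exists>i j. e = {T i, T j} \<or> e = {B i, B j})"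

datatype svtx = Up nat | Mid nat | Low nat

fun upper :: "vtx \<Rightarrow> svtx" where
  "upper (T i) = Up i" | "upper (B i) = Mid i"

fun lower :: "vtx \<Rightarrow> svtx" where
  "lower (T i) = Mid i" | "lower (B i) = Low i"

fun outer :: "vtx \<Rightarrow> svtx" where
  "outer (T i) = Up i" | "outer (B i) = Low i"

definition stack_edge :: "diagram \<Rightarrow> diagram \<Rightarrow> svtx \<Rightarrow> svtx \<Rightarrow> bool" where
  "stack_edge a b u w \<longleftrightarrow> (\<exists>e\<in>a. upper ` e = {u, w}) \<or> (\<exists>e\<in>b. lower ` e = {u, w})"

definition conn :: "diagram \<Rightarrow> diagram \<Rightarrow> svtx \<Rightarrow> svtx \<Rightarrow> bool" where
  "conn a b = (stack_edge a b)\<^sup>*\<^sup>*"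

definition comp :: "diagram \<Rightarrow> diagram \<Rightarrow> diagram" where
  "comp a b = {{u, v} | u v. u \<noteq> v \<and> conn a b (outer u) (outer v)}"

definition loops :: "nat \<Rightarrow> diagram \<Rightarrow> diagram \<Rightarrow> nat" where
  "loops n a b = card {C. \<exists>i\<in>{1..n}. C = {w. conn a b (Mid i) w} \<and> (\<forall>w\<in>C. \<exists>j. w = Mid j)}"

definition alg :: "nat \<Rightarrow> (diagram \<Rightarrow> 'k::field) set" where
  "alg n = {f. \<forall>D. D \<notin> rb n \<longrightarrow> f D = 0}"

definition basis :: "diagram \<Rightarrow> diagram \<Rightarrow> 'k::field" where
  "basis D = (\<lambda>c. if c = D then 1 else 0)"

definition mult :: "'k::field \<Rightarrow> nat \<Rightarrow> (diagram \<Rightarrow> 'k) \<Rightarrow> (diagram \<Rightarrow> 'k) \<Rightarrow> diagram \<Rightarrow> 'k" where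
  "mult x n f g = (\<lambda>c. \<Sum>a\<in>rb n. \<Sum>b\<in>rb n.
      if comp a b = c then f a * g b * x ^ loops n a b else 0)"

definition lalg :: "nat \<Rightarrow> (diagram \<Rightarrow> 'k::field) set" where
  "lalg n = {f \<in> alg n. \<forall>D. (\<exists>e\<in>D. horizontal_arc e) \<longrightarrow> f D = 0}"

definition idd :: "nat \<Rightarrow> diagram" where
  "idd n = {{T k, B k} | k. 1 \<le> k \<and> k \<le> n}"

definition perms :: "nat \<Rightarrow> diagram set" where
  "perms n = {D \<in> rb n. card D = n \<and> (\<forall>e\<in>D. vertical_arc e)}"

definition eps :: "nat \<Rightarrow> diagram \<Rightarrow> diagram" where
  "eps n D = insert {T n, B n} D"

definition ee :: "nat \<Rightarrow> nat \<Rightarrow> diagram" where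
  "ee n i = {{T k, B k} | k. 1 \<le> k \<and> k \<le> n \<and> k \<noteq> i \<and> k \<noteq> i + 1}
            \<union> {{T i, T (i + 1)}, {B i, B (i + 1)}}"

definition uu :: "nat \<Rightarrow> nat \<Rightarrow> diagram" where
  "uu n i = {{T k, B k} | k. 1 \<le> k \<and> k \<le> n \<and> k \<noteq> i}"

definition gg :: "nat \<Rightarrow> nat \<Rightarrow> diagram" where
  "gg n i = {{T k, B k} | k. 1 \<le> k \<and> k \<le> n \<and> k \<noteq> i \<and> k \<noteq> i + 1}
            \<union> {{T i, B (i + 1)}, {T (i + 1), B i}}"

inductive_set subalg :: "'k::field \<Rightarrow> nat \<Rightarrow> (diagram \<Rightarrow> 'k) set \<Rightarrow> (diagram \<Rightarrow> 'k) set"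
  for x n G where
  gen: "g \<in> G \<Longrightarrow> g \<in> subalg x n G"
| one: "basis (idd n) \<in> subalg x n G"
| smult: "f \<in> subalg x n G \<Longrightarrow> (\<lambda>c. r * f c) \<in> subalg x n G"
| add: "f \<in> subalg x n G \<Longrightarrow> g \<in> subalg x n G \<Longrightarrow> (\<lambda>c. f c + g c) \<in> subalg x n G"
| mul: "f \<in> subalg x n G \<Longrightarrow> g \<in> subalg x n G \<Longrightarrow> mult x n f g \<in> subalg x n G"

end

theory Submission
  imports Defs
begin


definition pt :: "diagram \<Rightarrow> vtx \<Rightarrow> vtx" where
  "pt D v = (if \<exists>w. w \<noteq> v \<and> {v, w} \<in> D then (THE w. w \<noteq> v \<and> {v, w} \<in> D) else v)"

definition good :: "nat \<Rightarrow> (vtx \<Rightarrow> vtx) \<Rightarrow> bool" where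
  "good n \<pi> \<longleftrightarrow> (\<forall>v. \<pi> (\<pi> v) = v) \<and> (\<forall>v. \<pi> v \<noteq> v \<longrightarrow> v \<in> verts n)"

definition diag :: "(vtx \<Rightarrow> vtx) \<Rightarrow> diagram" where
  "diag \<pi> = {{v, \<pi> v} | v. \<pi> v \<noteq> v}"

lemma rb_arcD: "D \<in> rb n \<Longrightarrow> e \<in> D \<Longrightarrow> \<exists>u v. u \<in> verts n \<and> v \<in> verts n \<and> u \<noteq> v \<and> e = {u, v}"
  unfolding rb_def by blast

lemma rb_disj: "D \<in> rb n \<Longrightarrow> e \<in> D \<Longrightarrow> e' \<in> D \<Longrightarrow> e \<noteq> e' \<Longrightarrow> e \<inter> e' = {}"
  unfolding rb_def by blast

lemma rb_uniq: assumes "D \<in> rb n" "{v, w} \<in> D" "{v, w'} \<in> D" "w \<noteq> v" "w' \<noteq> v"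
  shows "w = w'"
proof (rule ccontr)
  assume "w \<noteq> w'"
  then have "{v,w} \<noteq> {v,w'}" using assms by (auto simp: doubleton_eq_iff)
  then have "{v,w} \<inter> {v,w'} = {}" using rb_disj[OF assms(1-3)] by blast
  then show False by blast
qed

lemma rb_arc_neq: "D \<in> rb n \<Longrightarrow> {v, w} \<in> D \<Longrightarrow> w \<noteq> v"
  using rb_arcD by (fastforce simp: doubleton_eq_iff)

lemma rb_arc_verts: "D \<in> rb n \<Longrightarrow> {v, w} \<in> D \<Longrightarrow> v \<in> verts n \<and> w \<in> verts n"
  using rb_arcD by (fastforce simp: doubleton_eq_iff)

lemma pt_arc: "D \<in> rb n \<Longrightarrow> {v, w} \<in> D \<Longrightarrow> pt D v = w"
  unfolding pt_def
  apply (subgoal_tac "w \<noteq> v")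
   apply (subst if_P, blast)
   apply (rule the_equality, blast)
  using rb_uniq apply metis
  using rb_arc_neq by blast

lemma pt_none: "\<not> (\<exists>w. w \<noteq> v \<and> {v, w} \<in> D) \<Longrightarrow> pt D v = v"
  unfolding pt_def by auto

lemma pt_mem: assumes "D \<in> rb n" "pt D v \<noteq> v" shows "{v, pt D v} \<in> D"
proof -
  from assms(2) obtain w where "w \<noteq> v" "{v,w} \<in> D" unfolding pt_def by (metis)
  then show ?thesis using pt_arc[OF assms(1)] by simp
qed

lemma pt_invol: assumes "D \<in> rb n" shows "pt D (pt D v) = v"
proof (cases "pt D v = v")
  case True then show ?thesis by simp
next
  case False
  then have "{v, pt D v} \<in> D" using pt_mem assms by blast
  then have "{pt D v, v} \<in> D" by (simp add: insert_commute)
  then show ?thesis using pt_arc assms by blast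
qed

lemma pt_verts: assumes "D \<in> rb n" "pt D v \<noteq> v" shows "v \<in> verts n" "pt D v \<in> verts n"
  using pt_mem[OF assms] rb_arc_verts[OF assms(1)] by auto

lemma good_pt: "D \<in> rb n \<Longrightarrow> good n (pt D)"
  unfolding good_def using pt_invol pt_verts by blast

lemma diag_rb: assumes "good n \<pi>" shows "diag \<pi> \<in> rb n"
proof -
  have inv: "\<And>v. \<pi> (\<pi> v) = v" and vv: "\<And>v. \<pi> v \<noteq> v \<Longrightarrow> v \<in> verts n"
    using assms unfolding good_def by auto
  have vv2: "\<And>v. \<pi> v \<noteq> v \<Longrightarrow> \<pi> v \<in> verts n" using vv inv by metis
  have A: "\<forall>e\<in>diag \<pi>. \<exists>u v. u \<in> verts n \<and> v \<in> verts n \<and> u \<noteq> v \<and> e = {u, v}"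
    unfolding diag_def using vv vv2 by blast
  have B: "\<forall>e\<in>diag \<pi>. \<forall>e'\<in>diag \<pi>. e \<noteq> e' \<longrightarrow> e \<inter> e' = {}"
  proof (intro ballI impI)
    fix e e' assume "e \<in> diag \<pi>" "e' \<in> diag \<pi>" "e \<noteq> e'"
    then obtain v w where e: "e = {v, \<pi> v}" "e' = {w, \<pi> w}" unfolding diag_def by blast
    show "e \<inter> e' = {}"
    proof (rule ccontr)
      assume "e \<inter> e' \<noteq> {}"
      then obtain x where "x \<in> {v, \<pi> v}" "x \<in> {w, \<pi> w}" using e by blast
      then consider "x = v" "x = w" | "x = v" "x = \<pi> w" | "x = \<pi> v" "x = w" | "x = \<pi> v" "x = \<pi> w" by blast
      then have "{v, \<pi> v} = {w, \<pi> w}" using inv by cases (metis insert_commute)+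
      then show False using e \<open>e \<noteq> e'\<close> by simp
    qed
  qed
  show ?thesis unfolding rb_def using A B by blast
qed

lemma pt_diag: assumes "good n \<pi>" shows "pt (diag \<pi>) = \<pi>"
proof
  fix v
  have inv: "\<And>v. \<pi> (\<pi> v) = v" using assms unfolding good_def by auto
  show "pt (diag \<pi>) v = \<pi> v"
  proof (cases "\<pi> v = v")
    case True
    have "\<not> (\<exists>w. w \<noteq> v \<and> {v, w} \<in> diag \<pi>)"
      using True inv unfolding diag_def by (auto simp: doubleton_eq_iff)
    then show ?thesis using pt_none True by metis
  next
    case False
    then have "{v, \<pi> v} \<in> diag \<pi>" unfolding diag_def by blast
    then show ?thesis using pt_arc diag_rb[OF assms] by blast
  qed
qed

lemma diag_pt: assumes "D \<in> rb n" shows "diag (pt D) = D"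
proof
  show "diag (pt D) \<subseteq> D"
  proof
    fix e assume "e \<in> diag (pt D)"
    then obtain v where "e = {v, pt D v}" "pt D v \<noteq> v" unfolding diag_def by blast
    then show "e \<in> D" using pt_mem[OF assms, of v] by simp
  qed
  show "D \<subseteq> diag (pt D)"
  proof
    fix e assume "e \<in> D"
    obtain u v where "u \<in> verts n" "v \<in> verts n" "u \<noteq> v" "e = {u, v}"
      using rb_arcD[OF assms \<open>e \<in> D\<close>] by auto
    have "pt D u = v" apply (rule pt_arc[OF assms]) using \<open>e \<in> D\<close> \<open>e = {u, v}\<close> by simp
    then have "pt D u \<noteq> u" "e = {u, pt D u}" using \<open>u \<noteq> v\<close> \<open>e = {u,v}\<close> by auto
    then show "e \<in> diag (pt D)" unfolding diag_def by blast
  qed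
qed

lemma rb_eqI: assumes a: "D1 \<in> rb n" "D2 \<in> rb m" "\<And>v. pt D1 v = pt D2 v" shows "D1 = D2"
proof -
  have e: "pt D1 = pt D2" by (rule ext) (rule a(3))
  have "D1 = diag (pt D1)" by (rule diag_pt[OF a(1), symmetric])
  also have "\<dots> = diag (pt D2)" by (simp only: e)
  also have "\<dots> = D2" by (rule diag_pt[OF a(2)])
  finally show ?thesis .
qed



fun al :: "diagram \<Rightarrow> svtx \<Rightarrow> svtx" where
  "al a (Up i) = upper (pt a (T i))" | "al a (Mid i) = upper (pt a (B i))" | "al a (Low i) = Low i"
fun be :: "diagram \<Rightarrow> svtx \<Rightarrow> svtx" where
  "be b (Up i) = Up i" | "be b (Mid i) = lower (pt b (T i))" | "be b (Low i) = lower (pt b (B i))"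

lemma upper_inj: "upper x = upper y \<Longrightarrow> x = y"
  by (cases x; cases y) auto
lemma lower_inj: "lower x = lower y \<Longrightarrow> x = y"
  by (cases x; cases y) auto
lemma outer_inj: "outer x = outer y \<Longrightarrow> x = y"
  by (cases x; cases y) auto

lemma al_upper: "al a (upper x) = upper (pt a x)"
  by (cases x) auto
lemma be_lower: "be b (lower x) = lower (pt b x)"
  by (cases x) auto

lemma al_invol: assumes "a \<in> rb n" shows "al a (al a w) = w"
proof (cases w)
  case (Up i) then show ?thesis using al_upper pt_invol[OF assms] by simp
next
  case (Mid i) then show ?thesis using al_upper pt_invol[OF assms] by simp
qed simp

lemma be_invol: assumes "b \<in> rb n" shows "be b (be b w) = w"
proof (cases w)
  case (Mid i) then show ?thesis using be_lower pt_invol[OF assms] by simp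
next
  case (Low i) then show ?thesis using be_lower pt_invol[OF assms] by simp
qed simp

lemma edge_a: assumes "a \<in> rb n"
  shows "(\<exists>e\<in>a. upper ` e = {u, w}) \<longleftrightarrow> u \<noteq> w \<and> w = al a u"
proof
  assume "\<exists>e\<in>a. upper ` e = {u, w}"
  then obtain e where e: "e \<in> a" "upper ` e = {u, w}" by blast
  obtain x y where xy: "x \<noteq> y" "e = {x, y}" using rb_arcD[OF assms e(1)] by auto
  have ne: "upper x \<noteq> upper y" using xy(1) upper_inj by blast
  have p1: "pt a x = y" apply (rule pt_arc[OF assms]) using e(1) xy by simp
  have p2: "pt a y = x" apply (rule pt_arc[OF assms]) using e(1) xy by (simp add: insert_commute)
  have "{upper x, upper y} = {u, w}" using e(2) xy(2) by simp
  then have "(u = upper x \<and> w = upper y) \<or> (u = upper y \<and> w = upper x)"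
    by (auto simp: doubleton_eq_iff)
  then show "u \<noteq> w \<and> w = al a u" using ne p1 p2 al_upper by auto
next
  assume h: "u \<noteq> w \<and> w = al a u"
  show "\<exists>e\<in>a. upper ` e = {u, w}"
  proof (cases u)
    case (Up i)
    then have w: "w = upper (pt a (T i))" using h by simp
    then have "pt a (T i) \<noteq> T i" using h Up by auto
    then have "{T i, pt a (T i)} \<in> a" using pt_mem[OF assms] by blast
    moreover have "upper ` {T i, pt a (T i)} = {u, w}" using w Up by simp
    ultimately show ?thesis by blast
  next
    case (Mid i)
    then have w: "w = upper (pt a (B i))" using h by simp
    then have "pt a (B i) \<noteq> B i" using h Mid by auto
    then have "{B i, pt a (B i)} \<in> a" using pt_mem[OF assms] by blast
    moreover have "upper ` {B i, pt a (B i)} = {u, w}" using w Mid by simp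
    ultimately show ?thesis by blast
  next
    case (Low i) then show ?thesis using h by auto
  qed
qed

lemma edge_b: assumes "b \<in> rb n"
  shows "(\<exists>e\<in>b. lower ` e = {u, w}) \<longleftrightarrow> u \<noteq> w \<and> w = be b u"
proof
  assume "\<exists>e\<in>b. lower ` e = {u, w}"
  then obtain e where e: "e \<in> b" "lower ` e = {u, w}" by blast
  obtain x y where xy: "x \<noteq> y" "e = {x, y}" using rb_arcD[OF assms e(1)] by auto
  have ne: "lower x \<noteq> lower y" using xy(1) lower_inj by blast
  have p1: "pt b x = y" apply (rule pt_arc[OF assms]) using e(1) xy by simp
  have p2: "pt b y = x" apply (rule pt_arc[OF assms]) using e(1) xy by (simp add: insert_commute)
  have "{lower x, lower y} = {u, w}" using e(2) xy(2) by simp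
  then have "(u = lower x \<and> w = lower y) \<or> (u = lower y \<and> w = lower x)"
    by (auto simp: doubleton_eq_iff)
  then show "u \<noteq> w \<and> w = be b u" using ne p1 p2 be_lower by auto
next
  assume h: "u \<noteq> w \<and> w = be b u"
  show "\<exists>e\<in>b. lower ` e = {u, w}"
  proof (cases u)
    case (Mid i)
    then have w: "w = lower (pt b (T i))" using h by simp
    then have "pt b (T i) \<noteq> T i" using h Mid by auto
    then have "{T i, pt b (T i)} \<in> b" using pt_mem[OF assms] by blast
    moreover have "lower ` {T i, pt b (T i)} = {u, w}" using w Mid by simp
    ultimately show ?thesis by blast
  next
    case (Low i)
    then have w: "w = lower (pt b (B i))" using h by simp
    then have "pt b (B i) \<noteq> B i" using h Low by auto
    then have "{B i, pt b (B i)} \<in> b" using pt_mem[OF assms] by blast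
    moreover have "lower ` {B i, pt b (B i)} = {u, w}" using w Low by simp
    ultimately show ?thesis by blast
  next
    case (Up i) then show ?thesis using h by auto
  qed
qed

definition RR :: "('a \<Rightarrow> 'a) \<Rightarrow> ('a \<Rightarrow> 'a) \<Rightarrow> 'a \<Rightarrow> 'a \<Rightarrow> bool" where
  "RR f g x y \<longleftrightarrow> y = f x \<or> y = g x"

lemma RR_comm: "RR f g = RR g f"
  unfolding RR_def by (intro ext) blast

lemma se_iff: "a \<in> rb n \<Longrightarrow> b \<in> rb n \<Longrightarrow> stack_edge a b u w \<longleftrightarrow> u \<noteq> w \<and> RR (al a) (be b) u w"
  unfolding stack_edge_def RR_def by (simp only: edge_a edge_b) blast

lemma conn_iff: assumes "a \<in> rb n" "b \<in> rb n"
  shows "conn a b u w \<longleftrightarrow> (RR (al a) (be b))\<^sup>*\<^sup>* u w"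
proof
  assume "conn a b u w"
  then show "(RR (al a) (be b))\<^sup>*\<^sup>* u w" unfolding conn_def
  proof (induction rule: rtranclp_induct)
    case (step y z)
    have "RR (al a) (be b) y z" using step(2) se_iff[OF assms] by blast
    then show ?case by (rule rtranclp.rtrancl_into_rtrancl[OF step(3)])
  qed simp
next
  assume "(RR (al a) (be b))\<^sup>*\<^sup>* u w"
  then show "conn a b u w" unfolding conn_def
  proof (induction rule: rtranclp_induct)
    case (step y z)
    show ?case
    proof (cases "y = z")
      case True then show ?thesis using step(3) by simp
    next
      case False
      then have "stack_edge a b y z" using step(2) se_iff[OF assms] by blast
      then show ?thesis by (rule rtranclp.rtrancl_into_rtrancl[OF step(3)])
    qed
  qed simp
qed

lemma conn_sym: "conn a b x y \<Longrightarrow> conn a b y x"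
  unfolding conn_def
proof (induction rule: rtranclp_induct)
  case (step y z)
  have "stack_edge a b z y" using step(2) unfolding stack_edge_def by (simp add: insert_commute)
  then show ?case using step(3) by (rule converse_rtranclp_into_rtranclp)
qed simp

fun walk :: "('a \<Rightarrow> 'a) \<Rightarrow> ('a \<Rightarrow> 'a) \<Rightarrow> 'a \<Rightarrow> nat \<Rightarrow> 'a" where
  "walk f g u 0 = u"
| "walk f g u (Suc k) = (if even k then f else g) (walk f g u k)"

lemma walk_reach: "(RR f g)\<^sup>*\<^sup>* u (walk f g u k)"
proof (induction k)
  case (Suc k)
  have "RR f g (walk f g u k) (walk f g u (Suc k))" unfolding RR_def by simp
  then show ?case by (rule rtranclp.rtrancl_into_rtrancl[OF Suc])
qed simp

lemma walk_closed:
  assumes f: "\<And>x. f (f x) = x" and g: "\<And>x. g (g x) = x" and gu: "g u = u"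
    and r: "(RR f g)\<^sup>*\<^sup>* u w"
  shows "\<exists>k. w = walk f g u k"
  using r
proof (induction rule: rtranclp_induct)
  case base then show ?case by (rule exI[of _ 0]) simp
next
  case (step y z)
  then obtain k where y: "y = walk f g u k" by blast
  have A: "(if even k then f else g) y = walk f g u (Suc k)" using y by simp
  have Bo: "\<exists>j. (if even k then g else f) y = walk f g u j"
  proof (cases k)
    case 0 then show ?thesis using y gu by (intro exI[of _ 0]) simp
  next
    case (Suc j)
    have "(if even j then f else g) (walk f g u (Suc j)) = walk f g u j"
      using f g by simp
    then show ?thesis using y Suc by (intro exI[of _ j]) auto
  qed
  from step(2) have "z = f y \<or> z = g y" unfolding RR_def .
  then show ?case using A Bo by (cases "even k") (metis)+
qed

lemma walk_outer:
  assumes f: "\<And>x. f (f x) = x" and g: "\<And>x. g (g x) = x" and gu: "g u = u"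
    and Os: "\<And>x. x \<in> Os \<Longrightarrow> f x = x \<or> g x = x"
    and k: "0 < k" "walk f g u k \<in> Os" "\<And>i. 0 < i \<Longrightarrow> i < k \<Longrightarrow> walk f g u i \<notin> Os"
    and r: "(RR f g)\<^sup>*\<^sup>* u w" and w: "w \<in> Os"
  shows "w = u \<or> w = walk f g u k"
proof -
  let ?S = "walk f g u ` {..k}"
  have cl: "\<And>y. y \<in> ?S \<Longrightarrow> f y \<in> ?S \<and> g y \<in> ?S"
  proof -
    fix y assume "y \<in> ?S"
    then obtain i where i: "i \<le> k" "y = walk f g u i" by blast
    define h where "h = (if even i then f else g)"
    define h' where "h' = (if even i then g else f)"
    have fg: "{f y, g y} = {h y, h' y}" unfolding h_def h'_def by auto
    have H': "h' y \<in> ?S"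
    proof (cases i)
      case 0
      have "u \<in> ?S" by (rule image_eqI[of _ _ 0]) auto
      then show ?thesis using 0 i gu unfolding h'_def by auto
    next
      case (Suc j)
      have "(if even j then f else g) (walk f g u (Suc j)) = walk f g u j"
        using f g by simp
      then have "h' y = walk f g u j" using i Suc unfolding h'_def by auto
      then show ?thesis using i Suc by auto
    qed
    have H: "h y \<in> ?S"
    proof (cases "i < k")
      case True
      then have "h y = walk f g u (Suc i)" using i unfolding h_def by simp
      moreover have "walk f g u (Suc i) \<in> ?S" using True by (intro image_eqI[of _ _ "Suc i"]) auto
      ultimately show ?thesis by simp
    next
      case False
      then have ik: "i = k" using i by simp
      then have yO: "y \<in> Os" using i k by simp
      show ?thesis
      proof (cases "h y = y")
        case True then show ?thesis using \<open>y \<in> ?S\<close> by simp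
      next
        case False
        then have hy: "h' y = y" using Os[OF yO] unfolding h_def h'_def by auto
        obtain j where j: "k = Suc j" using k(1) by (cases k) auto
        have "(if even j then f else g) (walk f g u (Suc j)) = walk f g u j"
          using f g by simp
        then have "h' y = walk f g u j" using i ik j unfolding h'_def by auto
        then have yj: "walk f g u j = y" using hy by simp
        show ?thesis
        proof (cases j)
          case 0
          then have "y = u" using yj by simp
          moreover have "h = g" using ik j 0 unfolding h_def by simp
          ultimately show ?thesis using gu \<open>y \<in> ?S\<close> by simp
        next
          case (Suc j')
          then have "walk f g u j \<notin> Os" using k(3)[of j] j by simp
          then show ?thesis using yj yO by simp
        qed
      qed
    qed
    show "f y \<in> ?S \<and> g y \<in> ?S" using H H' fg by (auto simp: doubleton_eq_iff)
  qed
  have "w \<in> ?S" using r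
  proof (induction rule: rtranclp_induct)
    case base then show ?case by (auto intro: image_eqI[of _ _ 0])
  next
    case (step y z) then show ?case using cl unfolding RR_def by blast
  qed
  then obtain i where i: "i \<le> k" "w = walk f g u i" by blast
  show ?thesis
  proof (cases "i = 0 \<or> i = k")
    case True then show ?thesis using i by auto
  next
    case False then show ?thesis using k(3)[of i] i w by auto
  qed
qed

definition isO :: "svtx \<Rightarrow> bool" where "isO x \<longleftrightarrow> (\<exists>i. x = Up i) \<or> (\<exists>j. x = Low j)"

fun fv :: "diagram \<Rightarrow> diagram \<Rightarrow> vtx \<Rightarrow> svtx \<Rightarrow> svtx" where
  "fv a b (T i) = al a" | "fv a b (B j) = be b"
fun gv :: "diagram \<Rightarrow> diagram \<Rightarrow> vtx \<Rightarrow> svtx \<Rightarrow> svtx" where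
  "gv a b (T i) = be b" | "gv a b (B j) = al a"

definition wk :: "diagram \<Rightarrow> diagram \<Rightarrow> vtx \<Rightarrow> nat \<Rightarrow> svtx" where
  "wk a b v = walk (fv a b v) (gv a b v) (outer v)"

lemma RR_fg: "RR (fv a b v) (gv a b v) = RR (al a) (be b)"
  by (cases v) (auto simp: RR_comm)

lemma gv_outer: "gv a b v (outer v) = outer v"
  by (cases v) auto

lemma isO_outer: "isO (outer v)"
  by (cases v) (auto simp: isO_def)

lemma isO_inj: "isO x \<Longrightarrow> \<exists>v. x = outer v"
  unfolding isO_def by (metis outer.simps)

lemma fg_Os: "isO x \<Longrightarrow> fv a b v x = x \<or> gv a b v x = x"
  unfolding isO_def by (cases v) auto

lemma fv_invol: "a \<in> rb n \<Longrightarrow> b \<in> rb n \<Longrightarrow> fv a b v (fv a b v x) = x"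
  by (cases v) (auto simp: al_invol be_invol)
lemma gv_invol: "a \<in> rb n \<Longrightarrow> b \<in> rb n \<Longrightarrow> gv a b v (gv a b v x) = x"
  by (cases v) (auto simp: al_invol be_invol)

lemma conn_wk: assumes "a \<in> rb n" "b \<in> rb n" shows "conn a b (outer v) (wk a b v k)"
proof -
  have "(RR (fv a b v) (gv a b v))\<^sup>*\<^sup>* (outer v) (walk (fv a b v) (gv a b v) (outer v) k)"
    by (rule walk_reach)
  then show ?thesis by (simp only: RR_fg conn_iff[OF assms] wk_def)
qed

lemma conn_wk_closed: assumes "a \<in> rb n" "b \<in> rb n" "conn a b (outer v) w"
  shows "\<exists>k. w = wk a b v k"
  unfolding wk_def
  apply (rule walk_closed)
  using fv_invol[OF assms(1,2)] gv_invol[OF assms(1,2)] gv_outer assms(3)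
  unfolding conn_iff[OF assms(1,2)] RR_fg[symmetric, of a b v] by auto

lemma conn_wk_outer: assumes ab: "a \<in> rb n" "b \<in> rb n"
  and k: "0 < k" "isO (wk a b v k)" "\<And>i. 0 < i \<Longrightarrow> i < k \<Longrightarrow> \<not> isO (wk a b v i)"
  and c: "conn a b (outer v) w" "isO w"
  shows "w = outer v \<or> w = wk a b v k"
  using walk_outer[of "fv a b v" "gv a b v" "outer v" "Collect isO" k w]
    fv_invol[OF ab] gv_invol[OF ab] gv_outer fg_Os k c
  unfolding wk_def conn_iff[OF ab] RR_fg[symmetric, of a b v] by auto

lemma walk_const: "f u = u \<Longrightarrow> g u = u \<Longrightarrow> walk f g u k = u"
  by (induction k) auto

lemma outer_iso: assumes ab: "a \<in> rb n" "b \<in> rb n" and v: "v \<notin> verts n"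
  and c: "conn a b (outer v) w" shows "w = outer v"
proof -
  have p: "pt a v = v" "pt b v = v" using pt_verts(1)[OF ab(1)] pt_verts(1)[OF ab(2)] v by blast+
  have "fv a b v (outer v) = outer v" "gv a b v (outer v) = outer v"
    using p by (cases v; simp)+
  then have "\<And>k. wk a b v k = outer v" unfolding wk_def by (simp add: walk_const)
  then show ?thesis using conn_wk_closed[OF ab c] by auto
qed

lemma two_outer: assumes ab: "a \<in> rb n" "b \<in> rb n"
  and c: "conn a b (outer x) (outer y)" "conn a b (outer x) (outer y')" and ne: "y \<noteq> x" "y' \<noteq> x"
  shows "y = y'"
proof (cases "\<exists>k. 0 < k \<and> isO (wk a b x k)")
  case True
  define k where "k = (LEAST k. 0 < k \<and> isO (wk a b x k))"
  have k: "0 < k \<and> isO (wk a b x k)" unfolding k_def using True by (metis (mono_tags, lifting) LeastI)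
  have k2: "\<And>i. 0 < i \<Longrightarrow> i < k \<Longrightarrow> \<not> isO (wk a b x i)"
    unfolding k_def using not_less_Least by blast
  have "outer y = wk a b x k" using conn_wk_outer[OF ab _ _ k2 c(1)] k isO_outer ne outer_inj by blast
  moreover have "outer y' = wk a b x k" using conn_wk_outer[OF ab _ _ k2 c(2)] k isO_outer ne outer_inj by blast
  ultimately show ?thesis using outer_inj by metis
next
  case False
  obtain i where i: "outer y = wk a b x i" using conn_wk_closed[OF ab c(1)] by blast
  then have "i = 0" using False isO_outer by (metis gr0I)
  then have "outer y = outer x" using i unfolding wk_def by simp
  then show ?thesis using ne outer_inj by blast
qed

lemma comp_mem: "e \<in> comp a b \<longleftrightarrow> (\<exists>u v. e = {u, v} \<and> u \<noteq> v \<and> conn a b (outer u) (outer v))"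
  unfolding comp_def by blast

lemma comp_rb: assumes ab: "a \<in> rb n" "b \<in> rb n" shows "comp a b \<in> rb n"
proof -
  have A: "\<forall>e\<in>comp a b. \<exists>u v. u \<in> verts n \<and> v \<in> verts n \<and> u \<noteq> v \<and> e = {u, v}"
  proof
    fix e assume "e \<in> comp a b"
    then obtain u v where uv: "e = {u, v}" "u \<noteq> v" "conn a b (outer u) (outer v)"
      unfolding comp_mem by blast
    have "u \<in> verts n" using outer_iso[OF ab _ uv(3)] uv(2) outer_inj by metis
    moreover have "v \<in> verts n" using outer_iso[OF ab _ conn_sym[OF uv(3)]] uv(2) outer_inj by metis
    ultimately show "\<exists>u v. u \<in> verts n \<and> v \<in> verts n \<and> u \<noteq> v \<and> e = {u, v}" using uv by blast
  qed
  have Bd: "\<forall>e\<in>comp a b. \<forall>e'\<in>comp a b. e \<noteq> e' \<longrightarrow> e \<inter> e' = {}"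
  proof (intro ballI impI)
    fix e e' assume e: "e \<in> comp a b" "e' \<in> comp a b" "e \<noteq> e'"
    obtain u v where uv: "e = {u, v}" "u \<noteq> v" "conn a b (outer u) (outer v)"
      using e(1) unfolding comp_mem by blast
    obtain u' v' where uv': "e' = {u', v'}" "u' \<noteq> v'" "conn a b (outer u') (outer v')"
      using e(2) unfolding comp_mem by blast
    have key: "\<And>x y y'. conn a b (outer x) (outer y) \<Longrightarrow> conn a b (outer x) (outer y') \<Longrightarrow>
       y \<noteq> x \<Longrightarrow> y' \<noteq> x \<Longrightarrow> {x, y} = {x, y'}"
      using two_outer[OF ab] by blast
    show "e \<inter> e' = {}"
    proof (rule ccontr)
      assume "e \<inter> e' \<noteq> {}"
      then obtain z where "z \<in> e" "z \<in> e'" by blast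
      then consider "z = u" "z = u'" | "z = u" "z = v'" | "z = v" "z = u'" | "z = v" "z = v'"
        using uv uv' by blast
      then have "e = e'"
      proof cases
        case 1 then show ?thesis using key[of u v v'] uv uv' by auto
      next
        case 2 then show ?thesis using key[of u v u'] uv conn_sym[OF uv'(3)] uv' by (auto simp: insert_commute)
      next
        case 3 then show ?thesis using key[of v u v'] conn_sym[OF uv(3)] uv uv' by (auto simp: insert_commute)
      next
        case 4 then show ?thesis using key[of v u u'] conn_sym[OF uv(3)] conn_sym[OF uv'(3)] uv uv' by (auto simp: insert_commute)
      qed
      then show False using e(3) by simp
    qed
  qed
  show ?thesis unfolding rb_def using A Bd by blast
qed

lemma comp_pt: assumes ab: "a \<in> rb n" "b \<in> rb n"
  and k: "0 < k" "wk a b v k = outer w" "\<And>i. 0 < i \<Longrightarrow> i < k \<Longrightarrow> \<not> isO (wk a b v i)"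
  shows "pt (comp a b) v = w"
proof (cases "w = v")
  case False
  have "conn a b (outer v) (outer w)" using conn_wk[OF ab, of v k] k(2) by simp
  then have "{v, w} \<in> comp a b" unfolding comp_mem using False by blast
  then show ?thesis by (rule pt_arc[OF comp_rb[OF ab]])
next
  case True
  have "\<not> (\<exists>w'. w' \<noteq> v \<and> {v, w'} \<in> comp a b)"
  proof
    assume "\<exists>w'. w' \<noteq> v \<and> {v, w'} \<in> comp a b"
    then obtain w' u u' where w': "w' \<noteq> v" "{v, w'} = {u, u'}" "u \<noteq> u'" "conn a b (outer u) (outer u')"
      unfolding comp_mem by blast
    have "conn a b (outer v) (outer w')"
      using w' conn_sym by (auto simp: doubleton_eq_iff)
    then have "outer w' = outer v \<or> outer w' = wk a b v k"
      using conn_wk_outer[OF ab k(1) _ k(3)] k(2) isO_outer by metis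
    then show False using True k(2) w'(1) outer_inj by metis
  qed
  then show ?thesis using pt_none True by metis
qed

lemma hitT1: assumes ab: "a \<in> rb n" "b \<in> rb n" and p: "pt a (T i) = T i'"
  shows "pt (comp a b) (T i) = T i'"
  by (rule comp_pt[OF ab, of "Suc 0"]) (auto simp: wk_def p)

lemma hitT2: assumes ab: "a \<in> rb n" "b \<in> rb n" and p: "pt a (T i) = B k1" "pt b (T k1) = B j"
  shows "pt (comp a b) (T i) = B j"
  by (rule comp_pt[OF ab, of "Suc (Suc 0)"]) (auto simp: wk_def p isO_def less_Suc_eq)

lemma hitT3: assumes ab: "a \<in> rb n" "b \<in> rb n"
  and p: "pt a (T i) = B k1" "pt b (T k1) = T k2" "pt a (B k2) = T i'"
  shows "pt (comp a b) (T i) = T i'"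
  by (rule comp_pt[OF ab, of "Suc (Suc (Suc 0))"]) (auto simp: wk_def p isO_def less_Suc_eq)

lemma hitT4: assumes ab: "a \<in> rb n" "b \<in> rb n"
  and p: "pt a (T i) = B k1" "pt b (T k1) = T k2" "pt a (B k2) = B k3" "pt b (T k3) = B j"
  shows "pt (comp a b) (T i) = B j"
  by (rule comp_pt[OF ab, of "Suc (Suc (Suc (Suc 0)))"]) (auto simp: wk_def p isO_def less_Suc_eq)

lemma hitT5: assumes ab: "a \<in> rb n" "b \<in> rb n"
  and p: "pt a (T i) = B k1" "pt b (T k1) = T k2" "pt a (B k2) = B k3" "pt b (T k3) = T k4"
    "pt a (B k4) = T i'"
  shows "pt (comp a b) (T i) = T i'"
  by (rule comp_pt[OF ab, of "Suc (Suc (Suc (Suc (Suc 0))))"]) (auto simp: wk_def p isO_def less_Suc_eq)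

lemma hitB1: assumes ab: "a \<in> rb n" "b \<in> rb n" and p: "pt b (B j) = B j'"
  shows "pt (comp a b) (B j) = B j'"
  by (rule comp_pt[OF ab, of "Suc 0"]) (auto simp: wk_def p)

lemma hitB2: assumes ab: "a \<in> rb n" "b \<in> rb n" and p: "pt b (B j) = T k1" "pt a (B k1) = T i"
  shows "pt (comp a b) (B j) = T i"
  by (rule comp_pt[OF ab, of "Suc (Suc 0)"]) (auto simp: wk_def p isO_def less_Suc_eq)

lemma hitB3: assumes ab: "a \<in> rb n" "b \<in> rb n"
  and p: "pt b (B j) = T k1" "pt a (B k1) = B k2" "pt b (T k2) = B j'"
  shows "pt (comp a b) (B j) = B j'"
  by (rule comp_pt[OF ab, of "Suc (Suc (Suc 0))"]) (auto simp: wk_def p isO_def less_Suc_eq)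

lemma hitB4: assumes ab: "a \<in> rb n" "b \<in> rb n"
  and p: "pt b (B j) = T k1" "pt a (B k1) = B k2" "pt b (T k2) = T k3" "pt a (B k3) = T i"
  shows "pt (comp a b) (B j) = T i"
  by (rule comp_pt[OF ab, of "Suc (Suc (Suc (Suc 0)))"]) (auto simp: wk_def p isO_def less_Suc_eq)

lemma hitB5: assumes ab: "a \<in> rb n" "b \<in> rb n"
  and p: "pt b (B j) = T k1" "pt a (B k1) = B k2" "pt b (T k2) = T k3" "pt a (B k3) = B k4"
    "pt b (T k4) = B j'"
  shows "pt (comp a b) (B j) = B j'"
  by (rule comp_pt[OF ab, of "Suc (Suc (Suc (Suc (Suc 0))))"]) (auto simp: wk_def p isO_def less_Suc_eq)

lemma conn_refl: "conn a b x x" unfolding conn_def by simp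
lemma conn_trans: "conn a b x y \<Longrightarrow> conn a b y z \<Longrightarrow> conn a b x z"
  unfolding conn_def by (rule rtranclp_trans)
lemma conn_al: assumes "a \<in> rb n" "b \<in> rb n" shows "conn a b x (al a x)"
  unfolding conn_iff[OF assms] RR_def by (rule r_into_rtranclp) simp
lemma conn_be: assumes "a \<in> rb n" "b \<in> rb n" shows "conn a b x (be b x)"
  unfolding conn_iff[OF assms] RR_def by (rule r_into_rtranclp) simp

lemma MA1: "a \<in> rb n \<Longrightarrow> b \<in> rb n \<Longrightarrow> pt a (B k) = T i \<Longrightarrow> conn a b (Mid k) (Up i)"
  using conn_al[of a n b "Mid k"] by simp
lemma MA2: "a \<in> rb n \<Longrightarrow> b \<in> rb n \<Longrightarrow> pt a (B k) = B k' \<Longrightarrow> conn a b (Mid k) (Mid k')"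
  using conn_al[of a n b "Mid k"] by simp
lemma MB1: "a \<in> rb n \<Longrightarrow> b \<in> rb n \<Longrightarrow> pt b (T k) = B j \<Longrightarrow> conn a b (Mid k) (Low j)"
  using conn_be[of a n b "Mid k"] by simp
lemma MB2: "a \<in> rb n \<Longrightarrow> b \<in> rb n \<Longrightarrow> pt b (T k) = T k' \<Longrightarrow> conn a b (Mid k) (Mid k')"
  using conn_be[of a n b "Mid k"] by simp

lemma loops0: assumes "\<And>k. 1 \<le> k \<Longrightarrow> k \<le> n \<Longrightarrow> \<exists>w. conn a b (Mid k) w \<and> isO w"
  shows "loops n a b = 0"
proof -
  have "{C. \<exists>i\<in>{1..n}. C = {w. conn a b (Mid i) w} \<and> (\<forall>w\<in>C. \<exists>j. w = Mid j)} = {}"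
  proof (rule ccontr)
    assume "\<not> ?thesis"
    then obtain i where i: "i \<in> {1..n}" "\<forall>w\<in>{w. conn a b (Mid i) w}. \<exists>j. w = Mid j" by blast
    obtain w where "conn a b (Mid i) w" "isO w" using assms i(1) by auto
    then show False using i(2) unfolding isO_def by auto
  qed
  then show ?thesis unfolding loops_def by simp
qed



lemma verts_T[simp]: "T k \<in> verts n \<longleftrightarrow> 1 \<le> k \<and> k \<le> n"
  unfolding verts_def by auto
lemma verts_B[simp]: "B k \<in> verts n \<longleftrightarrow> 1 \<le> k \<and> k \<le> n"
  unfolding verts_def by auto

lemma pt_rng: "D \<in> rb n \<Longrightarrow> pt D v = T k \<Longrightarrow> pt D v \<noteq> v \<Longrightarrow> 1 \<le> k \<and> k \<le> n"
  using pt_verts(2) by fastforce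
lemma pt_rngB: "D \<in> rb n \<Longrightarrow> pt D v = B k \<Longrightarrow> pt D v \<noteq> v \<Longrightarrow> 1 \<le> k \<and> k \<le> n"
  using pt_verts(2) by fastforce
lemma pt_out: "D \<in> rb n \<Longrightarrow> v \<notin> verts n \<Longrightarrow> pt D v = v"
  using pt_verts(1) by blast

definition bijs :: "nat \<Rightarrow> (nat \<Rightarrow> nat) \<Rightarrow> (nat \<Rightarrow> nat) \<Rightarrow> bool" where
  "bijs n s s' \<longleftrightarrow> (\<forall>k. s' (s k) = k \<and> s (s' k) = k) \<and> (\<forall>k. \<not> (1 \<le> k \<and> k \<le> n) \<longrightarrow> s k = k)"

lemma bijs_D: assumes "bijs n s s'"
  shows "s' (s k) = k" "s (s' k) = k" "\<not> (1 \<le> k \<and> k \<le> n) \<Longrightarrow> s k = k"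
    "\<not> (1 \<le> k \<and> k \<le> n) \<Longrightarrow> s' k = k"
    "1 \<le> k \<Longrightarrow> k \<le> n \<Longrightarrow> 1 \<le> s k \<and> s k \<le> n"
    "1 \<le> k \<Longrightarrow> k \<le> n \<Longrightarrow> 1 \<le> s' k \<and> s' k \<le> n"
  using assms unfolding bijs_def by metis+

lemma bijs_sym: "bijs n s s' \<Longrightarrow> bijs n s' s"
  using bijs_D unfolding bijs_def by metis

definition pperm :: "nat \<Rightarrow> (nat \<Rightarrow> nat) \<Rightarrow> (nat \<Rightarrow> nat) \<Rightarrow> vtx \<Rightarrow> vtx" where
  "pperm n s s' v = (case v of T k \<Rightarrow> if 1 \<le> k \<and> k \<le> n then B (s k) else T k
                            | B k \<Rightarrow> if 1 \<le> k \<and> k \<le> n then T (s' k) else B k)"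

definition permd :: "nat \<Rightarrow> (nat \<Rightarrow> nat) \<Rightarrow> (nat \<Rightarrow> nat) \<Rightarrow> diagram" where
  "permd n s s' = diag (pperm n s s')"

lemma good_pperm: assumes "bijs n s s'" shows "good n (pperm n s s')"
  unfolding good_def pperm_def using bijs_D[OF assms]
  by (auto split: vtx.splits)

lemma permd_rb: "bijs n s s' \<Longrightarrow> permd n s s' \<in> rb n"
  unfolding permd_def by (rule diag_rb[OF good_pperm])

lemma pt_permd: "bijs n s s' \<Longrightarrow> pt (permd n s s') = pperm n s s'"
  unfolding permd_def by (rule pt_diag[OF good_pperm])

lemma pt_permd_T: "bijs n s s' \<Longrightarrow> 1 \<le> k \<Longrightarrow> k \<le> n \<Longrightarrow> pt (permd n s s') (T k) = B (s k)"
  by (simp add: pt_permd pperm_def)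
lemma pt_permd_B: "bijs n s s' \<Longrightarrow> 1 \<le> k \<Longrightarrow> k \<le> n \<Longrightarrow> pt (permd n s s') (B k) = T (s' k)"
  by (simp add: pt_permd pperm_def)
lemma pt_permd_B_out: "bijs n s s' \<Longrightarrow> \<not> (1 \<le> k \<and> k \<le> n) \<Longrightarrow> pt (permd n s s') (B k) = B k"
  by (simp add: pt_permd pperm_def)
lemma pt_permd_T_out: "bijs n s s' \<Longrightarrow> \<not> (1 \<le> k \<and> k \<le> n) \<Longrightarrow> pt (permd n s s') (T k) = T k"
  by (simp add: pt_permd pperm_def)

fun bm :: "(nat \<Rightarrow> nat) \<Rightarrow> vtx \<Rightarrow> vtx" where "bm s (T k) = T k" | "bm s (B k) = B (s k)"
fun tm :: "(nat \<Rightarrow> nat) \<Rightarrow> vtx \<Rightarrow> vtx" where "tm s (T k) = T (s k)" | "tm s (B k) = B k"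

lemma permR: assumes Y: "Y \<in> rb n" and s: "bijs n s s'"
  shows "pt (comp Y (permd n s s')) v = bm s (pt Y (bm s' v))"
    and "loops n Y (permd n s s') = 0"
proof -
  have P: "permd n s s' \<in> rb n" using permd_rb[OF s] .
  note sD = bijs_D[OF s]
  show "pt (comp Y (permd n s s')) v = bm s (pt Y (bm s' v))"
  proof (cases v)
    case (T i)
    show ?thesis
    proof (cases "pt Y (T i)")
      case (T i')
      then show ?thesis using hitT1[OF Y P] \<open>v = vtx.T i\<close> by simp
    next
      case (B k)
      then have k: "1 \<le> k \<and> k \<le> n" using pt_rngB[OF Y B] by simp
      show ?thesis using hitT2[OF Y P B pt_permd_T[OF s]] k \<open>v = vtx.T i\<close> B by simp
    qed
  next
    case (B j)
    show ?thesis
    proof (cases "1 \<le> j \<and> j \<le> n")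
      case True
      have p1: "pt (permd n s s') (B j) = T (s' j)" using pt_permd_B[OF s] True by simp
      have r: "1 \<le> s' j \<and> s' j \<le> n" using sD(6) True by blast
      show ?thesis
      proof (cases "pt Y (B (s' j))")
        case (T i)
        then show ?thesis using hitB2[OF Y P p1 T] \<open>v = B j\<close> by simp
      next
        case (B k)
        have k: "1 \<le> k \<and> k \<le> n"
        proof (cases "B k = B (s' j)")
          case True then show ?thesis using r by simp
        next
          case False then show ?thesis using pt_rngB[OF Y B] B by simp
        qed
        show ?thesis using hitB3[OF Y P p1 B pt_permd_T[OF s]] k \<open>v = vtx.B j\<close> B by simp
      qed
    next
      case False
      have "pt Y (B j) = B j" using pt_out[OF Y] False by simp
      then show ?thesis using hitB1[OF Y P pt_permd_B_out[OF s False]] \<open>v = B j\<close> sD(3,4)[OF False] by simp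
    qed
  qed
  show "loops n Y (permd n s s') = 0"
    by (rule loops0) (use MB1[OF Y P pt_permd_T[OF s]] isO_def in blast)
qed

lemma permL: assumes Y: "Y \<in> rb n" and s: "bijs n s s'"
  shows "pt (comp (permd n s s') Y) v = tm s' (pt Y (tm s v))"
    and "loops n (permd n s s') Y = 0"
proof -
  have P: "permd n s s' \<in> rb n" using permd_rb[OF s] .
  note sD = bijs_D[OF s]
  show "pt (comp (permd n s s') Y) v = tm s' (pt Y (tm s v))"
  proof (cases v)
    case (B j)
    show ?thesis
    proof (cases "pt Y (B j)")
      case (B j')
      then show ?thesis using hitB1[OF P Y] \<open>v = vtx.B j\<close> by simp
    next
      case (T k)
      then have k: "1 \<le> k \<and> k \<le> n" using pt_rng[OF Y T] by simp
      show ?thesis using hitB2[OF P Y T pt_permd_B[OF s]] k \<open>v = vtx.B j\<close> T by simp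
    qed
  next
    case (T i)
    show ?thesis
    proof (cases "1 \<le> i \<and> i \<le> n")
      case True
      have p1: "pt (permd n s s') (T i) = B (s i)" using pt_permd_T[OF s] True by simp
      have r: "1 \<le> s i \<and> s i \<le> n" using sD(5) True by blast
      show ?thesis
      proof (cases "pt Y (T (s i))")
        case (B j)
        then show ?thesis using hitT2[OF P Y p1 B] \<open>v = T i\<close> by simp
      next
        case (T k)
        have k: "1 \<le> k \<and> k \<le> n"
        proof (cases "T k = T (s i)")
          case True then show ?thesis using r by simp
        next
          case False then show ?thesis using pt_rng[OF Y T] T by simp
        qed
        show ?thesis using hitT3[OF P Y p1 T pt_permd_B[OF s]] k \<open>v = vtx.T i\<close> T by simp
      qed
    next
      case False
      have "pt Y (T i) = T i" using pt_out[OF Y] False by simp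
      then show ?thesis using hitT1[OF P Y pt_permd_T_out[OF s False]] \<open>v = T i\<close> sD(3,4)[OF False] by simp
    qed
  qed
  show "loops n (permd n s s') Y = 0"
    by (rule loops0) (use MA1[OF P Y pt_permd_B[OF s]] isO_def in blast)
qed

definition sw :: "nat \<Rightarrow> nat \<Rightarrow> nat \<Rightarrow> nat" where
  "sw a b k = (if k = a then b else if k = b then a else k)"

lemma bijs_sw: "1 \<le> a \<Longrightarrow> a \<le> n \<Longrightarrow> 1 \<le> b \<Longrightarrow> b \<le> n \<Longrightarrow> bijs n (sw a b) (sw a b)"
  unfolding bijs_def sw_def by auto

lemma bijs_id: "bijs n id id"
  unfolding bijs_def by auto

lemma permd_eq: assumes "bijs n s s'"
  shows "permd n s s' = {{T k, B (s k)} | k. 1 \<le> k \<and> k \<le> n}"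
proof -
  note sD = bijs_D[OF assms]
  show ?thesis unfolding permd_def diag_def pperm_def
  proof (intro set_eqI iffI)
    fix e assume "e \<in> {{v, case v of T k \<Rightarrow> if 1 \<le> k \<and> k \<le> n then B (s k) else T k
               | B k \<Rightarrow> if 1 \<le> k \<and> k \<le> n then T (s' k) else B k} | v.
          (case v of T k \<Rightarrow> if 1 \<le> k \<and> k \<le> n then B (s k) else T k
           | B k \<Rightarrow> if 1 \<le> k \<and> k \<le> n then T (s' k) else B k) \<noteq> v}"
    then obtain v where v: "e = {v, case v of T k \<Rightarrow> if 1 \<le> k \<and> k \<le> n then B (s k) else T k
               | B k \<Rightarrow> if 1 \<le> k \<and> k \<le> n then T (s' k) else B k}"
        "(case v of T k \<Rightarrow> if 1 \<le> k \<and> k \<le> n then B (s k) else T k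
           | B k \<Rightarrow> if 1 \<le> k \<and> k \<le> n then T (s' k) else B k) \<noteq> v" by blast
    show "e \<in> {{T k, B (s k)} | k. 1 \<le> k \<and> k \<le> n}"
    proof (cases v)
      case (T k) then show ?thesis using v by (auto split: if_splits)
    next
      case (B k)
      then have "1 \<le> k \<and> k \<le> n" using v by (auto split: if_splits)
      then have "e = {T (s' k), B (s (s' k))}" "1 \<le> s' k \<and> s' k \<le> n" using v B sD by (auto simp: insert_commute)
      then show ?thesis by blast
    qed
  next
    fix e assume "e \<in> {{T k, B (s k)} | k. 1 \<le> k \<and> k \<le> n}"
    then obtain k where "e = {T k, B (s k)}" "1 \<le> k \<and> k \<le> n" by blast
    then show "e \<in> {{v, case v of T k \<Rightarrow> if 1 \<le> k \<and> k \<le> n then B (s k) else T k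
               | B k \<Rightarrow> if 1 \<le> k \<and> k \<le> n then T (s' k) else B k} | v.
          (case v of T k \<Rightarrow> if 1 \<le> k \<and> k \<le> n then B (s k) else T k
           | B k \<Rightarrow> if 1 \<le> k \<and> k \<le> n then T (s' k) else B k) \<noteq> v}"
      by (intro CollectI exI[of _ "T k"]) simp
  qed
qed

lemma permd_perms: assumes "bijs n s s'" shows "permd n s s' \<in> perms n"
proof -
  have eq: "permd n s s' = (\<lambda>k. {T k, B (s k)}) ` {1..n}" using permd_eq[OF assms] by auto
  have "inj_on (\<lambda>k. {T k, B (s k)}) {1..n}" by (auto simp: inj_on_def doubleton_eq_iff)
  then have "card (permd n s s') = n" using eq card_image by fastforce
  moreover have "\<forall>e\<in>permd n s s'. vertical_arc e" using eq unfolding vertical_arc_def by auto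
  ultimately show ?thesis unfolding perms_def using permd_rb[OF assms] by blast
qed

lemma idd_eq: "idd n = permd n id id"
  unfolding permd_eq[OF bijs_id] idd_def by simp

lemma gg_eq: assumes "1 \<le> p" "p + 1 \<le> n" shows "gg n p = permd n (sw p (p+1)) (sw p (p+1))"
proof -
  have b: "bijs n (sw p (p+1)) (sw p (p+1))" using bijs_sw assms by simp
  show ?thesis unfolding permd_eq[OF b]
  proof (intro set_eqI iffI)
    fix e assume "e \<in> gg n p"
    then consider k where "e = {T k, B k}" "1 \<le> k" "k \<le> n" "k \<noteq> p" "k \<noteq> p+1"
      | "e = {T p, B (p+1)}" | "e = {T (p+1), B p}" unfolding gg_def by blast
    then show "e \<in> {{T k, B (sw p (p+1) k)} | k. 1 \<le> k \<and> k \<le> n}"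
    proof cases
      case (1 k) then show ?thesis unfolding sw_def by (intro CollectI exI[of _ k]) simp
    next
      case 2 then show ?thesis using assms unfolding sw_def by (intro CollectI exI[of _ p]) simp
    next
      case 3 then show ?thesis using assms unfolding sw_def by (intro CollectI exI[of _ "p+1"]) simp
    qed
  next
    fix e assume "e \<in> {{T k, B (sw p (p+1) k)} | k. 1 \<le> k \<and> k \<le> n}"
    then obtain k where k: "e = {T k, B (sw p (p+1) k)}" "1 \<le> k" "k \<le> n" by blast
    show "e \<in> gg n p"
    proof (cases "k = p \<or> k = p + 1")
      case True then show ?thesis using k unfolding gg_def sw_def by auto
    next
      case False
      then have "e = {T k, B k}" using k unfolding sw_def by simp
      then show ?thesis using k False unfolding gg_def by blast
    qed
  qed
qed

lemma diag_eqI: assumes "\<And>e. e \<in> D \<Longrightarrow> \<exists>v. e = {v, \<pi> v} \<and> \<pi> v \<noteq> v"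
  and "\<And>v. \<pi> v \<noteq> v \<Longrightarrow> {v, \<pi> v} \<in> D" shows "D = diag \<pi>"
  unfolding diag_def using assms by blast

definition pie :: "nat \<Rightarrow> nat \<Rightarrow> vtx \<Rightarrow> vtx" where
  "pie n p v = (case v of T k \<Rightarrow> if 1 \<le> k \<and> k \<le> n then (if k = p then T (p+1) else if k = p+1 then T p else B k) else T k
                        | B k \<Rightarrow> if 1 \<le> k \<and> k \<le> n then (if k = p then B (p+1) else if k = p+1 then B p else T k) else B k)"

definition piu :: "nat \<Rightarrow> nat \<Rightarrow> vtx \<Rightarrow> vtx" where
  "piu n m v = (case v of T k \<Rightarrow> if 1 \<le> k \<and> k \<le> n \<and> k \<noteq> m then B k else T k
                        | B k \<Rightarrow> if 1 \<le> k \<and> k \<le> n \<and> k \<noteq> m then T k else B k)"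

lemma good_pie: "1 \<le> p \<Longrightarrow> p + 1 \<le> n \<Longrightarrow> good n (pie n p)"
  unfolding good_def pie_def by (auto split: vtx.splits)

lemma good_piu: "good n (piu n m)"
  unfolding good_def piu_def by (auto split: vtx.splits)

lemma ee_eq: assumes "1 \<le> p" "p + 1 \<le> n" shows "ee n p = diag (pie n p)"
proof (rule diag_eqI)
  fix e assume "e \<in> ee n p"
  then consider k where "e = {T k, B k}" "1 \<le> k" "k \<le> n" "k \<noteq> p" "k \<noteq> p+1"
      | "e = {T p, T (p+1)}" | "e = {B p, B (p+1)}" unfolding ee_def by blast
  then show "\<exists>v. e = {v, pie n p v} \<and> pie n p v \<noteq> v"
  proof cases
    case (1 k) then show ?thesis unfolding pie_def by (intro exI[of _ "T k"]) simp
  next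
    case 2 then show ?thesis using assms unfolding pie_def by (intro exI[of _ "T p"]) simp
  next
    case 3 then show ?thesis using assms unfolding pie_def by (intro exI[of _ "B p"]) simp
  qed
next
  fix v assume v: "pie n p v \<noteq> v"
  show "{v, pie n p v} \<in> ee n p"
  proof (cases v)
    case (T k)
    then have k: "1 \<le> k \<and> k \<le> n" using v unfolding pie_def by (auto split: if_splits)
    show ?thesis
    proof (cases "k = p \<or> k = p + 1")
      case True then show ?thesis using T k unfolding pie_def ee_def by (auto simp: insert_commute)
    next
      case False then show ?thesis using T k unfolding pie_def ee_def by auto
    qed
  next
    case (B k)
    then have k: "1 \<le> k \<and> k \<le> n" using v unfolding pie_def by (auto split: if_splits)
    show ?thesis
    proof (cases "k = p \<or> k = p + 1")
      case True then show ?thesis using B k unfolding pie_def ee_def by (auto simp: insert_commute)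
    next
      case False then show ?thesis using B k unfolding pie_def ee_def by (auto simp: insert_commute)
    qed
  qed
qed

lemma uu_eq: "uu n m = diag (piu n m)"
proof (rule diag_eqI)
  fix e assume "e \<in> uu n m"
  then obtain k where "e = {T k, B k}" "1 \<le> k" "k \<le> n" "k \<noteq> m" unfolding uu_def by blast
  then show "\<exists>v. e = {v, piu n m v} \<and> piu n m v \<noteq> v" unfolding piu_def by (intro exI[of _ "T k"]) simp
next
  fix v assume v: "piu n m v \<noteq> v"
  show "{v, piu n m v} \<in> uu n m"
  proof (cases v)
    case (T k) then show ?thesis using v unfolding piu_def uu_def by (auto split: if_splits)
  next
    case (B k) then show ?thesis using v unfolding piu_def uu_def by (auto split: if_splits simp: insert_commute)
  qed
qed

lemma ee_rb: "1 \<le> p \<Longrightarrow> p + 1 \<le> n \<Longrightarrow> ee n p \<in> rb n"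
  using ee_eq diag_rb good_pie by simp
lemma pt_ee: "1 \<le> p \<Longrightarrow> p + 1 \<le> n \<Longrightarrow> pt (ee n p) = pie n p"
  using ee_eq pt_diag[OF good_pie] by simp
lemma uu_rb: "uu n m \<in> rb n"
  using uu_eq diag_rb good_piu by simp
lemma pt_uu: "pt (uu n m) = piu n m"
  using uu_eq pt_diag[OF good_piu] by simp


lemma finite_verts: "finite (verts n)"
proof -
  have "verts n \<subseteq> T ` {1..n} \<union> B ` {1..n}"
  proof
    fix x assume "x \<in> verts n"
    then obtain i where "1 \<le> i" "i \<le> n" "x = T i \<or> x = B i" unfolding verts_def by blast
    then show "x \<in> T ` {1..n} \<union> B ` {1..n}" by auto
  qed
  moreover have "finite (T ` {1..n} \<union> B ` {1..n})" by simp
  ultimately show ?thesis using finite_subset by blast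
qed

lemma finite_rb: "finite (rb n)"
proof -
  have "rb n \<subseteq> Pow (Pow (verts n))"
  proof
    fix D assume D: "D \<in> rb n"
    have "\<And>e. e \<in> D \<Longrightarrow> e \<subseteq> verts n"
    proof -
      fix e assume "e \<in> D"
      then obtain u v where "u \<in> verts n" "v \<in> verts n" "e = {u, v}" using rb_arcD[OF D] by metis
      then show "e \<subseteq> verts n" by simp
    qed
    then show "D \<in> Pow (Pow (verts n))" by blast
  qed
  moreover have "finite (Pow (Pow (verts n)))" using finite_verts by simp
  ultimately show ?thesis by (rule finite_subset)
qed
lemma mult_basis: fixes x :: "'k::field" assumes "A \<in> rb n" "Bd \<in> rb n"
  shows "mult x n (basis A) (basis Bd) = (\<lambda>c. if c = comp A Bd then x ^ loops n A Bd else 0)"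
proof
  fix c
  have "mult x n (basis A) (basis Bd) c = (\<Sum>a\<in>rb n. if a = A then (\<Sum>b\<in>rb n.
      if b = Bd then (if comp A Bd = c then x ^ loops n A Bd else 0) else 0) else 0)"
    unfolding mult_def
  proof (intro sum.cong refl)
    fix a assume "a \<in> rb n"
    show "(\<Sum>b\<in>rb n. if comp a b = c then (basis A a :: 'k) * basis Bd b * x ^ loops n a b else 0) =
      (if a = A then (\<Sum>b\<in>rb n. if b = Bd then (if comp A Bd = c then x ^ loops n A Bd else 0) else 0) else 0)"
    proof (cases "a = A")
      case True
      have "(\<Sum>b\<in>rb n. if comp a b = c then (basis A a :: 'k) * basis Bd b * x ^ loops n a b else 0) =
        (\<Sum>b\<in>rb n. if b = Bd then (if comp A Bd = c then x ^ loops n A Bd else 0) else 0)"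
        using True by (intro sum.cong refl) (auto simp: basis_def)
      then show ?thesis using True by simp
    next
      case False
      then show ?thesis unfolding basis_def by (simp cong: if_cong)
    qed
  qed
  also have "\<dots> = (if comp A Bd = c then x ^ loops n A Bd else 0)"
    using assms by (simp add: sum.delta[OF finite_rb])
  finally show "mult x n (basis A) (basis Bd) c = (if c = comp A Bd then x ^ loops n A Bd else 0)"
    by auto
qed

lemma mult_basis0: assumes "A \<in> rb n" "Bd \<in> rb n" "comp A Bd = C" "loops n A Bd = 0"
  shows "mult x n (basis A) (basis Bd) = basis C"
proof -
  have "mult x n (basis A) (basis Bd) = (\<lambda>c. if c = comp A Bd then x ^ loops n A Bd else 0)"
    by (rule mult_basis[OF assms(1,2)])
  also have "\<dots> = basis C" unfolding basis_def using assms(3,4) by auto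
  finally show ?thesis .
qed

lemma mult_basis3: assumes "P \<in> rb n" "Y \<in> rb n" "Q \<in> rb n"
  and "loops n P Y = 0" "loops n (comp P Y) Q = 0" "comp (comp P Y) Q = D"
  shows "mult x n (mult x n (basis P) (basis Y)) (basis Q) = basis D"
proof -
  have 1: "mult x n (basis P) (basis Y) = basis (comp P Y)"
    by (rule mult_basis0[OF assms(1,2) refl assms(4)])
  show ?thesis unfolding 1 by (rule mult_basis0[OF comp_rb[OF assms(1,2)] assms(3,6,5)])
qed

definition hor :: "diagram \<Rightarrow> bool" where "hor D \<longleftrightarrow> (\<exists>e\<in>D. horizontal_arc e)"

lemma nohor_pt: assumes "D \<in> rb n" "\<not> hor D"
  shows "pt D (T i) = T i' \<Longrightarrow> i' = i" "pt D (B j) = B j' \<Longrightarrow> j' = j"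
proof -
  show "pt D (T i) = T i' \<Longrightarrow> i' = i"
  proof (rule ccontr)
    assume a: "pt D (T i) = T i'" "i' \<noteq> i"
    then have "{T i, T i'} \<in> D" using pt_mem[OF assms(1), of "T i"] by simp
    then show False using assms(2) unfolding hor_def horizontal_arc_def by blast
  qed
  show "pt D (B j) = B j' \<Longrightarrow> j' = j"
  proof (rule ccontr)
    assume a: "pt D (B j) = B j'" "j' \<noteq> j"
    then have "{B j, B j'} \<in> D" using pt_mem[OF assms(1), of "B j"] by simp
    then show False using assms(2) unfolding hor_def horizontal_arc_def by blast
  qed
qed

lemma nohorI: assumes "D \<in> rb n" "\<And>i i'. pt D (T i) = T i' \<Longrightarrow> i' = i" "\<And>j j'. pt D (B j) = B j' \<Longrightarrow> j' = j"
  shows "\<not> hor D"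
proof
  assume "hor D"
  then obtain e where e: "e \<in> D" "horizontal_arc e" unfolding hor_def by blast
  obtain u v where uv: "u \<noteq> v" "e = {u, v}" using rb_arcD[OF assms(1) e(1)] by auto
  have p: "pt D u = v" using pt_arc[OF assms(1), of u v] e(1) uv by simp
  from e(2) obtain i j where "e = {T i, T j} \<or> e = {B i, B j}" unfolding horizontal_arc_def by blast
  then show False
  proof
    assume "e = {T i, T j}"
    then have "(u = T i \<and> v = T j) \<or> (u = T j \<and> v = T i)" using uv by (auto simp: doubleton_eq_iff)
    then show False
    proof
      assume "u = T i \<and> v = T j" then show False using p uv(1) assms(2)[of i j] by simp
    next
      assume "u = T j \<and> v = T i" then show False using p uv(1) assms(2)[of j i] by simp
    qed
  next
    assume "e = {B i, B j}"
    then have "(u = B i \<and> v = B j) \<or> (u = B j \<and> v = B i)" using uv by (auto simp: doubleton_eq_iff)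
    then show False
    proof
      assume "u = B i \<and> v = B j" then show False using p uv(1) assms(3)[of i j] by simp
    next
      assume "u = B j \<and> v = B i" then show False using p uv(1) assms(3)[of j i] by simp
    qed
  qed
qed

lemma comp_nohor: assumes ab: "a \<in> rb n" "b \<in> rb n" and h: "\<not> hor a" "\<not> hor b"
  shows "\<not> hor (comp a b)"
proof (rule nohorI[OF comp_rb[OF ab]])
  fix i i' assume c: "pt (comp a b) (T i) = T i'"
  show "i' = i"
  proof (cases "pt a (T i)")
    case (T i1)
    then have "i1 = i" using nohor_pt[OF ab(1) h(1)] by blast
    then show ?thesis using hitT1[OF ab T] c by simp
  next
    case (B k)
    show ?thesis
    proof (cases "pt b (T k)")
      case (T k')
      then have "k' = k" using nohor_pt[OF ab(2) h(2)] by blast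
      have "pt a (B k) = T i" using B pt_invol[OF ab(1), of "T i"] by simp
      then show ?thesis using hitT3[OF ab B T] \<open>k' = k\<close> c by simp
    next
      case (B j)
      then show ?thesis using hitT2[OF ab \<open>pt a (T i) = B k\<close> B] c by simp
    qed
  qed
next
  fix j j' assume c: "pt (comp a b) (B j) = B j'"
  show "j' = j"
  proof (cases "pt b (B j)")
    case (B j1)
    then have "j1 = j" using nohor_pt[OF ab(2) h(2)] by blast
    then show ?thesis using hitB1[OF ab B] c by simp
  next
    case (T k)
    show ?thesis
    proof (cases "pt a (B k)")
      case (B k')
      then have "k' = k" using nohor_pt[OF ab(1) h(1)] by blast
      have "pt b (T k) = B j" using T pt_invol[OF ab(2), of "B j"] by simp
      then show ?thesis using hitB3[OF ab T B] \<open>k' = k\<close> c by simp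
    next
      case (T i)
      then show ?thesis using hitB2[OF ab \<open>pt b (B j) = T k\<close> T] c by simp
    qed
  qed
qed

lemma basis_alg: "D \<in> rb n \<Longrightarrow> basis D \<in> alg n"
  unfolding alg_def basis_def by auto
lemma basis_lalg: "D \<in> rb n \<Longrightarrow> \<not> hor D \<Longrightarrow> basis D \<in> lalg n"
  unfolding lalg_def alg_def basis_def hor_def by auto

lemma mult_alg: assumes "f \<in> alg n" "g \<in> alg n" shows "mult x n f g \<in> alg n"
  unfolding alg_def mult_def
proof (intro CollectI allI impI)
  fix c assume c: "c \<notin> rb n"
  have "\<And>a b. a \<in> rb n \<Longrightarrow> b \<in> rb n \<Longrightarrow> comp a b \<noteq> c" using comp_rb c by blast
  then show "(\<Sum>a\<in>rb n. \<Sum>b\<in>rb n. if comp a b = c then f a * g b * x ^ loops n a b else 0) = 0"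
    by simp
qed

lemma mult_lalg: assumes "f \<in> lalg n" "g \<in> lalg n" shows "mult x n f g \<in> lalg n"
proof -
  have fa: "f \<in> alg n" "g \<in> alg n" using assms unfolding lalg_def by auto
  have "\<And>D. (\<exists>e\<in>D. horizontal_arc e) \<Longrightarrow> mult x n f g D = 0"
  proof -
    fix c assume hc: "\<exists>e\<in>c. horizontal_arc e"
    have "\<And>a b. a \<in> rb n \<Longrightarrow> b \<in> rb n \<Longrightarrow>
      (if comp a b = c then f a * g b * x ^ loops n a b else 0) = 0"
    proof -
      fix a b assume ab: "a \<in> rb n" "b \<in> rb n"
      show "(if comp a b = c then f a * g b * x ^ loops n a b else 0) = 0"
      proof (cases "comp a b = c")
        case True
        then have "hor a \<or> hor b" using comp_nohor[OF ab] hc unfolding hor_def by blast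
        then have "f a = 0 \<or> g b = 0" using assms unfolding lalg_def hor_def by blast
        then show ?thesis by auto
      qed simp
    qed
    then show "mult x n f g c = 0" unfolding mult_def by simp
  qed
  then show ?thesis using mult_alg[OF fa] unfolding lalg_def by blast
qed

lemma subalg_alg: assumes "G \<subseteq> alg n" "f \<in> subalg x n G" shows "f \<in> alg n"
  using assms(2)
proof (induction rule: subalg.induct)
  case (gen g) then show ?case using assms(1) by blast
next
  case one
  have "idd n \<in> rb n" unfolding idd_eq by (rule permd_rb[OF bijs_id])
  then show ?case by (rule basis_alg)
next
  case (smult f r) then show ?case unfolding alg_def by auto
next
  case (add f g) then show ?case unfolding alg_def by auto
next
  case (mul f g) then show ?case using mult_alg by blast
qed

lemma idd_nohor: "\<not> hor (idd n)"
  unfolding idd_eq permd_eq[OF bijs_id] hor_def horizontal_arc_def by (auto simp: doubleton_eq_iff)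

lemma subalg_lalg: assumes "G \<subseteq> lalg n" "f \<in> subalg x n G" shows "f \<in> lalg n"
  using assms(2)
proof (induction rule: subalg.induct)
  case (gen g) then show ?case using assms(1) by blast
next
  case one
  have "idd n \<in> rb n" unfolding idd_eq by (rule permd_rb[OF bijs_id])
  then show ?case using basis_lalg idd_nohor by blast
next
  case (smult f r) then show ?case unfolding lalg_def alg_def by auto
next
  case (add f g) then show ?case unfolding lalg_def alg_def by auto
next
  case (mul f g) then show ?case using mult_lalg by blast
qed

lemma sum_in_subalg: assumes "finite S" "\<And>D. D \<in> S \<Longrightarrow> basis D \<in> subalg x n G"
  shows "(\<lambda>c. \<Sum>D\<in>S. f D * basis D c) \<in> subalg x n G"
  using assms
proof (induction S rule: finite_induct)
  case empty
  have "(\<lambda>c. 0 * basis (idd n) c) \<in> subalg x n G" by (rule subalg.smult[OF subalg.one])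
  then show ?case by simp
next
  case (insert D S)
  have "(\<lambda>c. f D * basis D c) \<in> subalg x n G" using insert by (intro subalg.smult) auto
  moreover have "(\<lambda>c. \<Sum>D\<in>S. f D * basis D c) \<in> subalg x n G" using insert by auto
  ultimately have "(\<lambda>c. f D * basis D c + (\<Sum>D\<in>S. f D * basis D c)) \<in> subalg x n G"
    by (rule subalg.add)
  then show ?case using insert by simp
qed

lemma alg_sub: assumes "\<And>D. D \<in> rb n \<Longrightarrow> basis D \<in> subalg x n G" and f: "f \<in> alg n"
  shows "f \<in> subalg x n G"
proof -
  have "f = (\<lambda>c. \<Sum>D\<in>rb n. f D * basis D c)"
  proof
    fix c
    have "(\<Sum>D\<in>rb n. f D * basis D c) = (\<Sum>D\<in>rb n. if D = c then f c else 0)"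
      unfolding basis_def by (intro sum.cong) auto
    also have "\<dots> = f c" using finite_rb f unfolding alg_def by auto
    finally show "f c = (\<Sum>D\<in>rb n. f D * basis D c)" by simp
  qed
  then show ?thesis using sum_in_subalg[OF finite_rb assms(1)] by metis
qed

lemma lalg_sub: assumes "\<And>D. D \<in> rb n \<Longrightarrow> \<not> hor D \<Longrightarrow> basis D \<in> subalg x n G" and f: "f \<in> lalg n"
  shows "f \<in> subalg x n G"
proof -
  let ?S = "{D \<in> rb n. \<not> hor D}"
  have fin: "finite ?S" using finite_rb by simp
  have "f = (\<lambda>c. \<Sum>D\<in>?S. f D * basis D c)"
  proof
    fix c
    have "(\<Sum>D\<in>?S. f D * basis D c) = (\<Sum>D\<in>?S. if D = c then f c else 0)"
      unfolding basis_def by (intro sum.cong) auto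
    also have "\<dots> = f c" using fin f unfolding lalg_def alg_def hor_def by auto
    finally show "f c = (\<Sum>D\<in>?S. f D * basis D c)" by simp
  qed
  then show ?thesis using sum_in_subalg[OF fin, of x n G f] assms(1) by (metis (mono_tags, lifting) mem_Collect_eq)
qed



definition Rset :: "nat \<Rightarrow> nat \<Rightarrow> diagram set" where
  "Rset m n = {D \<in> rb n. \<forall>k. m < k \<and> k \<le> n \<longrightarrow> pt D (T k) = B k}"

definition dec :: "nat \<Rightarrow> nat \<Rightarrow> diagram \<Rightarrow> diagram \<Rightarrow> diagram \<Rightarrow> diagram \<Rightarrow> bool" where
  "dec n p D P y Q \<longleftrightarrow> P \<in> Rset p n \<and> Q \<in> Rset p n \<and> y \<in> rb n \<and> loops n P y = 0
     \<and> loops n (comp P y) Q = 0 \<and> comp (comp P y) Q = D"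

lemma Rset_rb: "D \<in> Rset m n \<Longrightarrow> D \<in> rb n"
  unfolding Rset_def by blast
lemma RsetD: "D \<in> Rset m n \<Longrightarrow> m < k \<Longrightarrow> k \<le> n \<Longrightarrow> pt D (T k) = B k"
  unfolding Rset_def by blast
lemma RsetD': "D \<in> Rset m n \<Longrightarrow> m < k \<Longrightarrow> k \<le> n \<Longrightarrow> pt D (B k) = T k"
proof -
  assume a: "D \<in> Rset m n" "m < k" "k \<le> n"
  have "pt D (T k) = B k" using RsetD[OF a] .
  then show ?thesis using pt_invol[OF Rset_rb[OF a(1)], of "T k"] by simp
qed

lemma bm_invol: "(\<And>k. s (s k) = k) \<Longrightarrow> bm s (bm s v) = v"
  by (cases v) auto
lemma tm_invol: "(\<And>k. s (s k) = k) \<Longrightarrow> tm s (tm s v) = v"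
  by (cases v) auto
lemma sw_invol: "sw a b (sw a b k) = k"
  unfolding sw_def by auto

lemma permd_Rset: assumes "bijs n s s'" "\<And>k. m < k \<Longrightarrow> s k = k" shows "permd n s s' \<in> Rset m n"
  unfolding Rset_def using permd_rb[OF assms(1)] pt_permd_T[OF assms(1)] assms(2) by auto

lemma permd_nohor: assumes "bijs n s s'" shows "\<not> hor (permd n s s')"
  by (rule nohorI[OF permd_rb[OF assms]]) (auto simp: pt_permd[OF assms] pperm_def split: if_splits)

lemma case_i: assumes D: "D \<in> Rset m n" and m: "m \<le> n" and j: "pt D (T m) = B j" "1 \<le> j" "j < m"
  shows "\<exists>P Q. dec n (m - 1) D P (gg n (m - 1)) Q \<and> (\<not> hor D \<longrightarrow> \<not> hor P \<and> \<not> hor Q)"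
proof -
  define p where "p = m - 1"
  have pm: "m = p + 1" "1 \<le> p" using j unfolding p_def by auto
  define \<sigma> where "\<sigma> = sw j p"
  define \<gamma> where "\<gamma> = sw p m"
  have bs: "bijs n \<sigma> \<sigma>" unfolding \<sigma>_def by (rule bijs_sw) (use j m pm in auto)
  have bg: "bijs n \<gamma> \<gamma>" unfolding \<gamma>_def by (rule bijs_sw) (use j m pm in auto)
  have Drb: "D \<in> rb n" using Rset_rb[OF D] .
  define Q where "Q = permd n \<sigma> \<sigma>"
  define y where "y = permd n \<gamma> \<gamma>"
  have Qrb: "Q \<in> rb n" unfolding Q_def by (rule permd_rb[OF bs])
  have yrb: "y \<in> rb n" unfolding y_def by (rule permd_rb[OF bg])
  have yg: "y = gg n p" unfolding y_def \<gamma>_def using gg_eq[of p n] pm m by simp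
  define X where "X = comp D Q"
  define P where "P = comp X y"
  have Xrb: "X \<in> rb n" unfolding X_def by (rule comp_rb[OF Drb Qrb])
  have Prb: "P \<in> rb n" unfolding P_def by (rule comp_rb[OF Xrb yrb])
  have ptX: "\<And>v. pt X v = bm \<sigma> (pt D (bm \<sigma> v))" unfolding X_def Q_def using permR(1)[OF Drb bs] by simp
  have ptP: "\<And>v. pt P v = bm \<gamma> (pt X (bm \<gamma> v))" unfolding P_def y_def using permR(1)[OF Xrb bg] by simp
  have sI: "\<And>k. \<sigma> (\<sigma> k) = k" "\<And>k. \<gamma> (\<gamma> k) = k" unfolding \<sigma>_def \<gamma>_def by (auto simp: sw_invol)
  have PY: "comp P y = X"
  proof (rule rb_eqI[OF comp_rb[OF Prb yrb] Xrb])
    fix v show "pt (comp P y) v = pt X v"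
      unfolding y_def using permR(1)[OF Prb bg] ptP bm_invol[OF sI(2)] by simp
  qed
  have XQ: "comp X Q = D"
  proof (rule rb_eqI[OF comp_rb[OF Xrb Qrb] Drb])
    fix v show "pt (comp X Q) v = pt D v"
      unfolding Q_def using permR(1)[OF Xrb bs] ptX bm_invol[OF sI(1)] by simp
  qed
  have PR: "P \<in> Rset p n"
    unfolding Rset_def
  proof (intro CollectI conjI allI impI Prb)
    fix k assume k: "p < k \<and> k \<le> n"
    show "pt P (T k) = B k"
    proof (cases "k = m")
      case True
      have s1: "\<sigma> j = p" unfolding \<sigma>_def sw_def by simp
      have s2: "\<gamma> p = m" unfolding \<gamma>_def sw_def by simp
      have "pt P (T m) = bm \<gamma> (bm \<sigma> (pt D (T m)))" using ptP ptX by simp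
      also have "\<dots> = B m" using j(1) s1 s2 by simp
      finally show ?thesis using True by simp
    next
      case False
      then have "m < k" using k pm by auto
      then have "pt D (T k) = B k" using RsetD[OF D] k by blast
      moreover have "\<sigma> k = k" "\<gamma> k = k" unfolding \<sigma>_def \<gamma>_def sw_def using \<open>m < k\<close> j pm by auto
      ultimately show ?thesis using ptP ptX by simp
    qed
  qed
  have jp: "j \<le> p" using j pm by simp
  have QR: "Q \<in> Rset p n" unfolding Q_def by (rule permd_Rset[OF bs]) (use jp in \<open>auto simp: \<sigma>_def sw_def\<close>)
  have l1: "loops n P y = 0" unfolding y_def by (rule permR(2)[OF Prb bg])
  have l2: "loops n (comp P y) Q = 0" unfolding PY Q_def by (rule permR(2)[OF Xrb bs])
  have "dec n p D P y Q" unfolding dec_def using PR QR yrb l1 l2 PY XQ by simp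
  moreover have "\<not> hor D \<longrightarrow> \<not> hor P \<and> \<not> hor Q"
  proof
    assume h: "\<not> hor D"
    have hQ: "\<not> hor Q" unfolding Q_def by (rule permd_nohor[OF bs])
    have hy: "\<not> hor y" unfolding y_def by (rule permd_nohor[OF bg])
    have "\<not> hor X" unfolding X_def by (rule comp_nohor[OF Drb Qrb h hQ])
    then have "\<not> hor P" unfolding P_def by (rule comp_nohor[OF Xrb yrb _ hy])
    then show "\<not> hor P \<and> \<not> hor Q" using hQ by simp
  qed
  ultimately show ?thesis using yg p_def by blast
qed

lemma tm_inv: "(\<And>k. s' (s k) = k) \<Longrightarrow> tm s' (tm s v) = v"
  by (cases v) auto
lemma bm_inv: "(\<And>k. s' (s k) = k) \<Longrightarrow> bm s' (bm s v) = v"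
  by (cases v) auto

lemma bm_id[simp]: "bm id v = v" by (cases v) auto

lemma bijs_comp: assumes "bijs n a a'" "bijs n b b'" shows "bijs n (b \<circ> a) (a' \<circ> b')"
  using bijs_D[OF assms(1)] bijs_D[OF assms(2)] unfolding bijs_def by simp

lemma case_ii: assumes D: "D \<in> Rset m n" and m: "m \<le> n" and j: "pt D (B m) = T j" "1 \<le> j" "j < m"
  shows "\<exists>P Q. dec n (m - 1) D P (gg n (m - 1)) Q \<and> (\<not> hor D \<longrightarrow> \<not> hor P \<and> \<not> hor Q)"
proof -
  define p where "p = m - 1"
  have pm: "m = p + 1" "1 \<le> p" using j unfolding p_def by auto
  have jp: "j \<le> p" using j pm by simp
  define \<sigma> where "\<sigma> = sw j p"
  define \<gamma> where "\<gamma> = sw p m"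
  have bs: "bijs n \<sigma> \<sigma>" unfolding \<sigma>_def by (rule bijs_sw) (use j m pm in auto)
  have bg: "bijs n \<gamma> \<gamma>" unfolding \<gamma>_def by (rule bijs_sw) (use j m pm in auto)
  define s where "s = \<gamma> \<circ> \<sigma>"
  define s' where "s' = \<sigma> \<circ> \<gamma>"
  have b1: "bijs n s s'" unfolding s_def s'_def by (rule bijs_comp[OF bs bg])
  have b2: "bijs n s' s" by (rule bijs_sym[OF b1])
  have Drb: "D \<in> rb n" using Rset_rb[OF D] .
  define P where "P = permd n \<sigma> \<sigma>"
  define y where "y = permd n \<gamma> \<gamma>"
  define Q where "Q = comp (permd n s' s) D"
  have Prb: "P \<in> rb n" unfolding P_def by (rule permd_rb[OF bs])
  have yrb: "y \<in> rb n" unfolding y_def by (rule permd_rb[OF bg])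
  have Qrb: "Q \<in> rb n" unfolding Q_def by (rule comp_rb[OF permd_rb[OF b2] Drb])
  have yg: "y = gg n p" unfolding y_def \<gamma>_def using gg_eq[of p n] pm m by simp
  have Py: "comp P y = permd n s s'"
  proof (rule rb_eqI[OF comp_rb[OF Prb yrb] permd_rb[OF b1]])
    fix v
    have e: "pt (comp P y) v = bm \<gamma> (pperm n \<sigma> \<sigma> (bm \<gamma> v))"
      unfolding y_def P_def using permR(1)[OF permd_rb[OF bs] bg] pt_permd[OF bs] by simp
    show "pt (comp P y) v = pt (permd n s s') v"
      unfolding e pt_permd[OF b1] using bijs_D[OF bg] bijs_D[OF bs]
      by (cases v) (auto simp: pperm_def s_def s'_def)
  qed
  have ptQ: "\<And>v. pt Q v = tm s (pt D (tm s' v))" unfolding Q_def using permL(1)[OF Drb b2] by simp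
  have PyQ: "comp (comp P y) Q = D"
  proof (rule rb_eqI[OF comp_rb[OF comp_rb[OF Prb yrb] Qrb] Drb])
    fix v
    have "pt (comp (comp P y) Q) v = tm s' (pt Q (tm s v))" unfolding Py using permL(1)[OF Qrb b1] by simp
    also have "\<dots> = pt D v" unfolding ptQ using bijs_D[OF b1] tm_inv by metis
    finally show "pt (comp (comp P y) Q) v = pt D v" .
  qed
  have QR: "Q \<in> Rset p n"
    unfolding Rset_def
  proof (intro CollectI conjI allI impI Qrb)
    fix k assume k: "p < k \<and> k \<le> n"
    show "pt Q (T k) = B k"
    proof (cases "k = m")
      case True
      have s1: "s' m = j" unfolding s'_def \<sigma>_def \<gamma>_def sw_def by simp
      have dj: "pt D (T j) = B m" using j(1) pt_invol[OF Drb, of "B m"] by simp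
      have "pt Q (T m) = tm s (pt D (T (s' m)))" using ptQ by simp
      also have "\<dots> = B m" using s1 dj by simp
      finally show ?thesis using True by simp
    next
      case False
      then have "m < k" using k pm by auto
      then have "pt D (T k) = B k" using RsetD[OF D] k by blast
      moreover have "s' k = k" unfolding s'_def \<sigma>_def \<gamma>_def sw_def using \<open>m < k\<close> jp pm by auto
      ultimately show ?thesis using ptQ by simp
    qed
  qed
  have PR: "P \<in> Rset p n" unfolding P_def by (rule permd_Rset[OF bs]) (use jp in \<open>auto simp: \<sigma>_def sw_def\<close>)
  have l1: "loops n P y = 0" unfolding y_def P_def by (rule permR(2)[OF permd_rb[OF bs] bg])
  have l2: "loops n (comp P y) Q = 0" unfolding Py by (rule permL(2)[OF Qrb b1])
  have "dec n p D P y Q" unfolding dec_def using PR QR yrb l1 l2 PyQ by simp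
  moreover have "\<not> hor D \<longrightarrow> \<not> hor P \<and> \<not> hor Q"
  proof
    assume h: "\<not> hor D"
    have hP: "\<not> hor P" unfolding P_def by (rule permd_nohor[OF bs])
    have "\<not> hor Q" unfolding Q_def by (rule comp_nohor[OF permd_rb[OF b2] Drb permd_nohor[OF b2] h])
    then show "\<not> hor P \<and> \<not> hor Q" using hP by simp
  qed
  ultimately show ?thesis using yg p_def by blast
qed

lemma pt_uu_T: "pt (uu n m) (T k) = (if 1 \<le> k \<and> k \<le> n \<and> k \<noteq> m then B k else T k)"
  unfolding pt_uu piu_def by simp
lemma pt_uu_B: "pt (uu n m) (B k) = (if 1 \<le> k \<and> k \<le> n \<and> k \<noteq> m then T k else B k)"
  unfolding pt_uu piu_def by simp

lemma case_v: assumes D: "D \<in> Rset m n" and m: "1 \<le> m" "m \<le> n"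
  and t: "pt D (T m) = T m" and b: "pt D (B m) = B m"
  shows "\<exists>P Q. dec n (m - 1) D P (uu n m) Q \<and> (\<not> hor D \<longrightarrow> \<not> hor P \<and> \<not> hor Q)"
proof -
  have Drb: "D \<in> rb n" using Rset_rb[OF D] .
  define \<delta> where "\<delta> = pt D"
  have di: "\<And>v. \<delta> (\<delta> v) = v" unfolding \<delta>_def using pt_invol[OF Drb] by simp
  define \<pi> where "\<pi> v = (if v = T m then B m else if v = B m then T m else \<delta> v)" for v
  have good: "good n \<pi>"
    unfolding good_def
  proof (intro conjI allI impI)
    fix v show "\<pi> (\<pi> v) = v"
    proof (cases "v = T m \<or> v = B m")
      case True then show ?thesis unfolding \<pi>_def by auto
    next
      case False
      have "\<delta> v \<noteq> T m" "\<delta> v \<noteq> B m" using False di t b unfolding \<delta>_def by metis+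
      then show ?thesis using False di unfolding \<pi>_def by simp
    qed
  next
    fix v assume "\<pi> v \<noteq> v"
    then show "v \<in> verts n" using m pt_verts(1)[OF Drb, of v] unfolding \<pi>_def \<delta>_def by (auto split: if_splits)
  qed
  define P where "P = diag \<pi>"
  have Prb: "P \<in> rb n" unfolding P_def by (rule diag_rb[OF good])
  have ptP: "pt P = \<pi>" unfolding P_def by (rule pt_diag[OF good])
  define y where "y = uu n m"
  have yrb: "y \<in> rb n" unfolding y_def by (rule uu_rb)
  have Py: "comp P y = D"
  proof (rule rb_eqI[OF comp_rb[OF Prb yrb] Drb])
    fix v show "pt (comp P y) v = pt D v"
    proof (cases v)
      case (T k)
      show ?thesis
      proof (cases "k = m")
        case True
        have "pt P (T m) = B m" "pt y (T m) = T m" "pt P (B m) = T m"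
          unfolding ptP \<pi>_def y_def pt_uu_T by auto
        then show ?thesis using hitT3[OF Prb yrb] T True t by simp
      next
        case False
        have pP: "pt P (T k) = pt D (T k)" unfolding ptP \<pi>_def \<delta>_def using False by simp
        show ?thesis
        proof (cases "pt D (T k)")
          case (T i) then show ?thesis using hitT1[OF Prb yrb] pP \<open>v = T k\<close> by simp
        next
          case (B j)
          have jm: "j \<noteq> m" using B b pt_invol[OF Drb, of "T k"] by auto
          have jr: "1 \<le> j \<and> j \<le> n" using pt_rngB[OF Drb B] B by simp
          have "pt y (T j) = B j" unfolding y_def pt_uu_T using jm jr by simp
          then show ?thesis using hitT2[OF Prb yrb] pP B \<open>v = T k\<close> by simp
        qed
      qed
    next
      case (B k)
      show ?thesis
      proof (cases "1 \<le> k \<and> k \<le> n \<and> k \<noteq> m")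
        case False
        have "pt y (B k) = B k" unfolding y_def pt_uu_B using False by simp
        moreover have "pt D (B k) = B k"
        proof (cases "k = m")
          case True then show ?thesis using b by simp
        next
          case False
          then have "B k \<notin> verts n" using \<open>\<not> (1 \<le> k \<and> k \<le> n \<and> k \<noteq> m)\<close> by simp
          then show ?thesis using pt_out[OF Drb] by blast
        qed
        ultimately show ?thesis using hitB1[OF Prb yrb] \<open>v = B k\<close> by simp
      next
        case True
        have py: "pt y (B k) = T k" unfolding y_def pt_uu_B using True by simp
        have pP: "pt P (B k) = pt D (B k)" unfolding ptP \<pi>_def \<delta>_def using True by simp
        show ?thesis
        proof (cases "pt D (B k)")
          case (T i) then show ?thesis using hitB2[OF Prb yrb py] pP \<open>v = B k\<close> by simp
        next
          case (B k')
          have km: "k' \<noteq> m" using B b pt_invol[OF Drb, of "vtx.B k"] True by auto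
          have kr: "1 \<le> k' \<and> k' \<le> n"
          proof (cases "k' = k")
            case True then show ?thesis using \<open>1 \<le> k \<and> k \<le> n \<and> k \<noteq> m\<close> by simp
          next
            case False then show ?thesis using pt_rngB[OF Drb B] B by simp
          qed
          have "pt y (T k') = B k'" unfolding y_def pt_uu_T using km kr by simp
          then show ?thesis using hitB3[OF Prb yrb py] pP B \<open>v = vtx.B k\<close> by simp
        qed
      qed
    qed
  qed
  have l1: "loops n P y = 0"
  proof (rule loops0)
    fix k assume k: "1 \<le> k" "k \<le> n"
    show "\<exists>w. conn P y (Mid k) w \<and> isO w"
    proof (cases "k = m")
      case True
      have "pt P (B m) = T m" unfolding ptP \<pi>_def by simp
      then show ?thesis using MA1[OF Prb yrb] True isO_def by blast
    next
      case False
      have "pt y (T k) = B k" unfolding y_def pt_uu_T using False k by simp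
      then show ?thesis using MB1[OF Prb yrb] isO_def by blast
    qed
  qed
  define Q where "Q = permd n id id"
  have Qrb: "Q \<in> rb n" unfolding Q_def by (rule permd_rb[OF bijs_id])
  have PyQ: "comp (comp P y) Q = D"
  proof (rule rb_eqI[OF comp_rb[OF comp_rb[OF Prb yrb] Qrb] Drb])
    fix v show "pt (comp (comp P y) Q) v = pt D v"
      unfolding Py Q_def permR(1)[OF Drb bijs_id] by simp
  qed
  have l2: "loops n (comp P y) Q = 0" unfolding Py Q_def by (rule permR(2)[OF Drb bijs_id])
  have PR: "P \<in> Rset (m - 1) n"
    unfolding Rset_def
  proof (intro CollectI conjI allI impI Prb)
    fix k assume k: "m - 1 < k \<and> k \<le> n"
    show "pt P (T k) = B k"
    proof (cases "k = m")
      case True then show ?thesis unfolding ptP \<pi>_def by simp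
    next
      case False
      then have "m < k" using k by auto
      then show ?thesis using RsetD[OF D] k unfolding ptP \<pi>_def \<delta>_def by auto
    qed
  qed
  have QR: "Q \<in> Rset (m - 1) n" unfolding Q_def by (rule permd_Rset[OF bijs_id]) simp
  have "dec n (m - 1) D P y Q" unfolding dec_def using PR QR yrb l1 l2 PyQ by simp
  moreover have "\<not> hor D \<longrightarrow> \<not> hor P \<and> \<not> hor Q"
  proof
    assume h: "\<not> hor D"
    have hQ: "\<not> hor Q" unfolding Q_def by (rule permd_nohor[OF bijs_id])
    have "\<not> hor P"
    proof (rule nohorI[OF Prb])
      fix i i' assume a: "pt P (T i) = T i'"
      show "i' = i"
      proof (cases "i = m")
        case True then show ?thesis using a unfolding ptP \<pi>_def by simp
      next
        case False then show ?thesis using a nohor_pt(1)[OF Drb h] unfolding ptP \<pi>_def \<delta>_def by simp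
      qed
    next
      fix i i' assume a: "pt P (B i) = B i'"
      show "i' = i"
      proof (cases "i = m")
        case True then show ?thesis using a unfolding ptP \<pi>_def by simp
      next
        case False then show ?thesis using a nohor_pt(2)[OF Drb h] unfolding ptP \<pi>_def \<delta>_def by simp
      qed
    qed
    then show "\<not> hor P \<and> \<not> hor Q" using hQ by simp
  qed
  ultimately show ?thesis unfolding y_def by blast
qed

lemma pt_ee_T: "1 \<le> p \<Longrightarrow> p + 1 \<le> n \<Longrightarrow> pt (ee n p) (T k) =
   (if 1 \<le> k \<and> k \<le> n then (if k = p then T (p+1) else if k = p+1 then T p else B k) else T k)"
  unfolding pt_ee pie_def by simp
lemma pt_ee_B: "1 \<le> p \<Longrightarrow> p + 1 \<le> n \<Longrightarrow> pt (ee n p) (B k) =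
   (if 1 \<le> k \<and> k \<le> n then (if k = p then B (p+1) else if k = p+1 then B p else T k) else B k)"
  unfolding pt_ee pie_def by simp

lemma case_iii: assumes D: "D \<in> Rset m n" and m: "m \<le> n" and j: "pt D (B m) = B j" "1 \<le> j" "j < m"
  and t: "pt D (T m) = T t"
  shows "\<exists>P Q. dec n (m - 1) D P (ee n (m - 1)) Q"
proof -
  define p where "p = m - 1"
  have pm: "m = p + 1" "1 \<le> p" using j unfolding p_def by auto
  have jp: "j \<le> p" using j pm by simp
  define \<sigma> where "\<sigma> = sw j p"
  have bs: "bijs n \<sigma> \<sigma>" unfolding \<sigma>_def by (rule bijs_sw) (use j m pm in auto)
  have sI: "\<And>k. \<sigma> (\<sigma> k) = k" unfolding \<sigma>_def by (simp add: sw_invol)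
  have Drb: "D \<in> rb n" using Rset_rb[OF D] .
  define Q where "Q = permd n \<sigma> \<sigma>"
  have Qrb: "Q \<in> rb n" unfolding Q_def by (rule permd_rb[OF bs])
  define X where "X = comp D Q"
  have Xrb: "X \<in> rb n" unfolding X_def by (rule comp_rb[OF Drb Qrb])
  define \<xi> where "\<xi> = pt X"
  have ptX: "\<And>v. \<xi> v = bm \<sigma> (pt D (bm \<sigma> v))" unfolding \<xi>_def X_def Q_def using permR(1)[OF Drb bs] by simp
  have xi: "\<And>v. \<xi> (\<xi> v) = v" unfolding \<xi>_def using pt_invol[OF Xrb] by simp
  have s1: "\<sigma> p = j" "\<sigma> j = p" "\<sigma> m = m" unfolding \<sigma>_def sw_def using pm jp by auto
  have dBj: "pt D (B j) = B m" using j(1) pt_invol[OF Drb, of "B m"] by simp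
  have xBp: "\<xi> (B p) = B m" using ptX[of "B p"] s1 dBj by simp
  have xBm: "\<xi> (B m) = B p" using xi[of "B p"] xBp by simp
  have xTm: "\<xi> (T m) = T t" using ptX[of "T m"] t by simp
  have yrb: "ee n p \<in> rb n" using ee_rb pm m by simp
  define \<pi> where "\<pi> v = (if v = T m then B m else if v = B m then T m
     else if v = B p then (if \<xi> (T m) = T m then B p else \<xi> (T m))
     else if \<xi> v = T m then B p else \<xi> v)" for v
  have good: "good n \<pi>"
    unfolding good_def
  proof (intro conjI allI impI)
    fix v show "\<pi> (\<pi> v) = v"
    proof (cases "v = T m \<or> v = B m \<or> v = B p")
      case True
      then consider "v = T m" | "v = B m" | "v = B p" by blast
      then show ?thesis
      proof cases
        case 1 then show ?thesis unfolding \<pi>_def using pm by auto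
      next
        case 2 then show ?thesis unfolding \<pi>_def using pm by auto
      next
        case 3
        show ?thesis
        proof (cases "t = m")
          case True then show ?thesis unfolding \<pi>_def using 3 xTm pm by auto
        next
          case False
          have "\<xi> (T t) = T m" using xi[of "T m"] xTm by simp
          then show ?thesis unfolding \<pi>_def using 3 xTm pm False by auto
        qed
      qed
    next
      case False
      show ?thesis
      proof (cases "\<xi> v = T m")
        case True
        then have "\<xi> (T m) = v" using xi[of v] by simp
        then show ?thesis unfolding \<pi>_def using False True pm by auto
      next
        case nT: False
        have "\<xi> v \<noteq> B m" using False xi[of v] xBm by metis
        moreover have "\<xi> v \<noteq> B p" using False xi[of v] xBp by metis
        moreover have "\<xi> (\<xi> v) \<noteq> T m" using xi False by simp
        ultimately show ?thesis unfolding \<pi>_def using False nT xi[of v] by simp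
      qed
    qed
  next
    fix v assume a: "\<pi> v \<noteq> v"
    show "v \<in> verts n"
    proof (cases "v = T m \<or> v = B m \<or> v = B p")
      case True then show ?thesis using pm m by auto
    next
      case False
      then have "\<xi> v \<noteq> v" using a unfolding \<pi>_def by (auto split: if_splits)
      then show ?thesis unfolding \<xi>_def using pt_verts(1)[OF Xrb] by blast
    qed
  qed
  define P where "P = diag \<pi>"
  have Prb: "P \<in> rb n" unfolding P_def by (rule diag_rb[OF good])
  have ptP: "pt P = \<pi>" unfolding P_def by (rule pt_diag[OF good])
  have eT: "\<And>k. pt (ee n p) (T k) = (if 1 \<le> k \<and> k \<le> n then (if k = p then T m else if k = m then T p else B k) else T k)"
    using pt_ee_T[of p n] pm m by simp
  have eB: "\<And>k. pt (ee n p) (B k) = (if 1 \<le> k \<and> k \<le> n then (if k = p then B m else if k = m then B p else T k) else B k)"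
    using pt_ee_B[of p n] pm m by simp
  have mr: "1 \<le> m" "1 \<le> p" "p \<le> n" "m \<noteq> p" using pm m by auto
  have Py: "comp P (ee n p) = X"
  proof (rule rb_eqI[OF comp_rb[OF Prb yrb] Xrb])
    fix v show "pt (comp P (ee n p)) v = pt X v"
    proof (cases v)
      case (T i)
      show ?thesis
      proof (cases "i = m")
        case True
        have a1: "pt P (T m) = B m" "pt (ee n p) (T m) = T p" unfolding ptP \<pi>_def eT using mr m by auto
        show ?thesis
        proof (cases "t = m")
          case tm: True
          have "pt P (B p) = B p" "pt (ee n p) (T p) = T m" "pt P (B m) = T m"
            unfolding ptP \<pi>_def eT using mr m xTm tm by auto
          then show ?thesis using hitT5[OF Prb yrb a1] \<open>v = T i\<close> True xTm tm unfolding \<xi>_def by simp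
        next
          case False
          have "pt P (B p) = T t" unfolding ptP \<pi>_def using mr xTm False by auto
          then show ?thesis using hitT3[OF Prb yrb a1] \<open>v = T i\<close> True xTm unfolding \<xi>_def by simp
        qed
      next
        case False
        have pP: "pt P (T i) = (if \<xi> (T i) = T m then B p else \<xi> (T i))" unfolding ptP \<pi>_def using False by simp
        show ?thesis
        proof (cases "\<xi> (T i) = T m")
          case True
          have "pt P (T i) = B p" "pt (ee n p) (T p) = T m" "pt P (B m) = T m"
            using pP True unfolding ptP \<pi>_def eT using mr m by auto
          then show ?thesis using hitT3[OF Prb yrb] \<open>v = T i\<close> True unfolding \<xi>_def by simp
        next
          case nT: False
          show ?thesis
          proof (cases "\<xi> (T i)")
            case (T i')
            then show ?thesis using hitT1[OF Prb yrb, of i i'] pP nT \<open>v = T i\<close> unfolding \<xi>_def by simp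
          next
            case (B k)
            have kp: "k \<noteq> p" using B xi[of "T i"] xBp by auto
            have km: "k \<noteq> m" using B xi[of "T i"] xBm by auto
            have kr: "1 \<le> k \<and> k \<le> n" using pt_rngB[OF Xrb, of "T i" k] B unfolding \<xi>_def by simp
            have "pt (ee n p) (T k) = B k" unfolding eT using kp km kr by simp
            then show ?thesis using hitT2[OF Prb yrb] pP nT B \<open>v = T i\<close> unfolding \<xi>_def by simp
          qed
        qed
      qed
    next
      case (B k)
      show ?thesis
      proof (cases "1 \<le> k \<and> k \<le> n")
        case False
        have "pt (ee n p) (B k) = B k" unfolding eB using False mr m by auto
        moreover have "\<xi> (B k) = B k" unfolding \<xi>_def using pt_out[OF Xrb] False by simp
        ultimately show ?thesis using hitB1[OF Prb yrb] \<open>v = B k\<close> unfolding \<xi>_def by simp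
      next
        case kr: True
        show ?thesis
        proof (cases "k = p \<or> k = m")
          case True
          then show ?thesis
          proof
            assume "k = p"
            then have "pt (ee n p) (B k) = B m" unfolding eB using kr by simp
            then show ?thesis using hitB1[OF Prb yrb] \<open>v = B k\<close> \<open>k = p\<close> xBp unfolding \<xi>_def by simp
          next
            assume "k = m"
            then have "pt (ee n p) (B k) = B p" unfolding eB using kr mr by simp
            then show ?thesis using hitB1[OF Prb yrb] \<open>v = B k\<close> \<open>k = m\<close> xBm unfolding \<xi>_def by simp
          qed
        next
          case False
          have py: "pt (ee n p) (B k) = T k" unfolding eB using kr False by simp
          have nTm: "\<xi> (B k) \<noteq> T m" using xi[of "vtx.B k"] xTm by auto
          have pP: "pt P (B k) = \<xi> (B k)" unfolding ptP \<pi>_def using False nTm by auto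
          show ?thesis
          proof (cases "\<xi> (B k)")
            case (T i) then show ?thesis using hitB2[OF Prb yrb py] pP \<open>v = B k\<close> unfolding \<xi>_def by simp
          next
            case (B k')
            have kp: "k' \<noteq> p" using B xi[of "vtx.B k"] xBp False by auto
            have km: "k' \<noteq> m" using B xi[of "vtx.B k"] xBm False by auto
            have kr': "1 \<le> k' \<and> k' \<le> n"
            proof (cases "k' = k")
              case True then show ?thesis using kr by simp
            next
              case False then show ?thesis using pt_rngB[OF Xrb, of "vtx.B k" k'] B unfolding \<xi>_def by simp
            qed
            have "pt (ee n p) (T k') = B k'" unfolding eT using kp km kr' by simp
            then show ?thesis using hitB3[OF Prb yrb py] pP B \<open>v = vtx.B k\<close> unfolding \<xi>_def by simp
          qed
        qed
      qed
    qed
  qed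
  have l1: "loops n P (ee n p) = 0"
  proof (rule loops0)
    fix k assume k: "1 \<le> k" "k \<le> n"
    have mA: "pt P (B m) = T m" unfolding ptP \<pi>_def using mr by simp
    show "\<exists>w. conn P (ee n p) (Mid k) w \<and> isO w"
    proof (cases "k = m \<or> k = p")
      case True
      then show ?thesis
      proof
        assume "k = m" then show ?thesis using MA1[OF Prb yrb mA] isO_def by blast
      next
        assume "k = p"
        have "pt (ee n p) (T p) = T m" unfolding eT using mr by simp
        then have "conn P (ee n p) (Mid k) (Mid m)" using MB2[OF Prb yrb] \<open>k = p\<close> by simp
        then show ?thesis using MA1[OF Prb yrb mA] conn_trans isO_def by blast
      qed
    next
      case False
      have "pt (ee n p) (T k) = B k" unfolding eT using False k by simp
      then show ?thesis using MB1[OF Prb yrb] isO_def by blast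
    qed
  qed
  have XQ: "comp X Q = D"
  proof (rule rb_eqI[OF comp_rb[OF Xrb Qrb] Drb])
    fix v show "pt (comp X Q) v = pt D v"
      unfolding Q_def using permR(1)[OF Xrb bs] ptX bm_invol[OF sI] unfolding \<xi>_def by simp
  qed
  have l2: "loops n (comp P (ee n p)) Q = 0" unfolding Py Q_def by (rule permR(2)[OF Xrb bs])
  have PR: "P \<in> Rset p n"
    unfolding Rset_def
  proof (intro CollectI conjI allI impI Prb)
    fix k assume k: "p < k \<and> k \<le> n"
    show "pt P (T k) = B k"
    proof (cases "k = m")
      case True then show ?thesis unfolding ptP \<pi>_def by simp
    next
      case False
      then have "m < k" using k pm by auto
      then have "pt D (T k) = B k" using RsetD[OF D] k by blast
      moreover have "\<sigma> k = k" unfolding \<sigma>_def sw_def using \<open>m < k\<close> jp pm by auto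
      ultimately have "\<xi> (T k) = B k" using ptX by simp
      then show ?thesis unfolding ptP \<pi>_def using False \<open>m < k\<close> pm by auto
    qed
  qed
  have QR: "Q \<in> Rset p n" unfolding Q_def by (rule permd_Rset[OF bs]) (use jp in \<open>auto simp: \<sigma>_def sw_def\<close>)
  have "dec n p D P (ee n p) Q" unfolding dec_def using PR QR yrb l1 l2 Py XQ by simp
  then show ?thesis using p_def by blast
qed

lemma case_iv: assumes D: "D \<in> Rset m n" and m: "m \<le> n" and i: "pt D (T m) = T i" "1 \<le> i" "i < m"
  and b: "pt D (B m) = B m"
  shows "\<exists>P Q. dec n (m - 1) D P (ee n (m - 1)) Q"
proof -
  define p where "p = m - 1"
  have pm: "m = p + 1" "1 \<le> p" using i unfolding p_def by auto
  have ip: "i \<le> p" using i pm by simp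
  define \<sigma> where "\<sigma> = sw i p"
  have bs: "bijs n \<sigma> \<sigma>" unfolding \<sigma>_def by (rule bijs_sw) (use i m pm in auto)
  have sI: "\<And>k. \<sigma> (\<sigma> k) = k" unfolding \<sigma>_def by (simp add: sw_invol)
  have s1: "\<sigma> p = i" "\<sigma> i = p" "\<sigma> m = m" unfolding \<sigma>_def sw_def using pm ip by auto
  have sr: "\<And>k. 1 \<le> k \<Longrightarrow> k \<le> n \<Longrightarrow> 1 \<le> \<sigma> k \<and> \<sigma> k \<le> n" using bijs_D(5)[OF bs] by blast
  have so: "\<And>k. \<not> (1 \<le> k \<and> k \<le> n) \<Longrightarrow> \<sigma> k = k" using bijs_D(3)[OF bs] by blast
  have Drb: "D \<in> rb n" using Rset_rb[OF D] .
  define \<delta> where "\<delta> = pt D"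
  have di: "\<And>v. \<delta> (\<delta> v) = v" unfolding \<delta>_def using pt_invol[OF Drb] by simp
  have dTi: "\<delta> (T i) = T m" using di[of "T m"] i(1) unfolding \<delta>_def by simp
  define \<zeta> where "\<zeta> v = tm \<sigma> (\<delta> (tm \<sigma> v))" for v
  have zi: "\<And>v. \<zeta> (\<zeta> v) = v" unfolding \<zeta>_def using di tm_invol[OF sI] by simp
  have zTm: "\<zeta> (T m) = T p" unfolding \<zeta>_def using s1 i(1) \<delta>_def by simp
  have zTp: "\<zeta> (T p) = T m" unfolding \<zeta>_def using s1 dTi by simp
  have zBm: "\<zeta> (B m) = B m" unfolding \<zeta>_def using b \<delta>_def by simp
  have zv: "\<And>v. \<zeta> v \<noteq> v \<Longrightarrow> v \<in> verts n"
  proof -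
    fix v assume a: "\<zeta> v \<noteq> v"
    show "v \<in> verts n"
    proof (cases v)
      case (T k)
      show ?thesis
      proof (rule ccontr)
        assume "v \<notin> verts n"
        then have "\<not> (1 \<le> k \<and> k \<le> n)" using T by simp
        then have "\<sigma> k = k" "\<delta> (T k) = T k" using so pt_out[OF Drb] unfolding \<delta>_def by auto
        then show False using a T unfolding \<zeta>_def by simp
      qed
    next
      case (B k)
      then have "\<delta> (B k) \<noteq> B k" using a unfolding \<zeta>_def by auto
      then show ?thesis using B pt_verts(1)[OF Drb] unfolding \<delta>_def by blast
    qed
  qed
  define \<pi> where "\<pi> v = (if v = T m then B m else if v = B m then T m else if v = T p then T p else \<zeta> v)" for v
  have good: "good n \<pi>"
    unfolding good_def
  proof (intro conjI allI impI)
    fix v show "\<pi> (\<pi> v) = v"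
    proof (cases "v = T m \<or> v = B m \<or> v = T p")
      case True then show ?thesis unfolding \<pi>_def using pm by auto
    next
      case False
      have "\<zeta> v \<noteq> T m" using zi[of v] zTm False by metis
      moreover have "\<zeta> v \<noteq> B m" using zi[of v] zBm False by metis
      moreover have "\<zeta> v \<noteq> T p" using zi[of v] zTp False by metis
      ultimately show ?thesis unfolding \<pi>_def using False zi[of v] by simp
    qed
  next
    fix v assume a: "\<pi> v \<noteq> v"
    show "v \<in> verts n"
    proof (cases "v = T m \<or> v = B m \<or> v = T p")
      case True then show ?thesis using pm m by auto
    next
      case False
      then have "\<zeta> v \<noteq> v" using a unfolding \<pi>_def by auto
      then show ?thesis by (rule zv)
    qed
  qed
  define P where "P = diag \<pi>"
  have Prb: "P \<in> rb n" unfolding P_def by (rule diag_rb[OF good])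
  have ptP: "pt P = \<pi>" unfolding P_def by (rule pt_diag[OF good])
  have yrb: "ee n p \<in> rb n" using ee_rb pm m by simp
  define Q0 where "Q0 = permd n \<sigma> \<sigma>"
  have Q0rb: "Q0 \<in> rb n" unfolding Q0_def by (rule permd_rb[OF bs])
  define Z where "Z = comp Q0 (ee n p)"
  have Zrb: "Z \<in> rb n" unfolding Z_def by (rule comp_rb[OF Q0rb yrb])
  have eT: "\<And>k. pt (ee n p) (T k) = (if 1 \<le> k \<and> k \<le> n then (if k = p then T m else if k = m then T p else B k) else T k)"
    using pt_ee_T[of p n] pm m by simp
  have eB: "\<And>k. pt (ee n p) (B k) = (if 1 \<le> k \<and> k \<le> n then (if k = p then B m else if k = m then B p else T k) else B k)"
    using pt_ee_B[of p n] pm m by simp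
  have mr: "1 \<le> m" "1 \<le> p" "p \<le> n" "m \<noteq> p" "1 \<le> i" "i \<le> n" "i \<noteq> m" "m \<le> n" using pm m i by auto
  have ptZ: "\<And>v. pt Z v = tm \<sigma> (pt (ee n p) (tm \<sigma> v))" unfolding Z_def Q0_def using permL(1)[OF yrb bs] by simp
  have sne: "\<And>k. 1 \<le> k \<Longrightarrow> k \<le> n \<Longrightarrow> k \<noteq> i \<Longrightarrow> k \<noteq> m \<Longrightarrow> \<sigma> k \<noteq> p \<and> \<sigma> k \<noteq> m"
    unfolding \<sigma>_def sw_def using mr ip pm by auto
  have ZBo: "\<And>k. 1 \<le> k \<Longrightarrow> k \<le> n \<Longrightarrow> k \<noteq> i \<Longrightarrow> k \<noteq> m \<Longrightarrow> pt Z (B (\<sigma> k)) = T k"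
  proof -
    fix k assume k: "1 \<le> k" "k \<le> n" "k \<noteq> i" "k \<noteq> m"
    show "pt Z (B (\<sigma> k)) = T k" unfolding ptZ using sne[OF k] sr[OF k(1,2)] eB sI by simp
  qed
  have ZD: "comp Z P = D"
  proof (rule rb_eqI[OF comp_rb[OF Zrb Prb] Drb])
    fix v show "pt (comp Z P) v = pt D v"
    proof (cases v)
      case (T k)
      show ?thesis
      proof (cases "1 \<le> k \<and> k \<le> n")
        case False
        have "pt Z (T k) = T k" unfolding ptZ using so[OF False] eT False mr m by auto
        moreover have "pt D (T k) = T k" using pt_out[OF Drb] False by simp
        ultimately show ?thesis using hitT1[OF Zrb Prb] T by simp
      next
        case kr: True
        show ?thesis
        proof (cases "k = i \<or> k = m")
          case True
          then show ?thesis
          proof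
            assume "k = i"
            then have "pt Z (T k) = T m" unfolding ptZ using s1 eT mr by simp
            then show ?thesis using hitT1[OF Zrb Prb] T \<open>k = i\<close> dTi unfolding \<delta>_def by simp
          next
            assume "k = m"
            then have "pt Z (T k) = T i" unfolding ptZ using s1 eT mr by simp
            then show ?thesis using hitT1[OF Zrb Prb] T \<open>k = m\<close> i(1) by simp
          qed
        next
          case False
          have k4: "1 \<le> k" "k \<le> n" "k \<noteq> i" "k \<noteq> m" using kr False by auto
          have z1: "pt Z (T k) = B (\<sigma> k)" unfolding ptZ using sne[OF k4] sr[OF k4(1,2)] eT by simp
          have pP: "pt P (T (\<sigma> k)) = tm \<sigma> (\<delta> (T k))"
            unfolding ptP \<pi>_def \<zeta>_def using sne[OF k4] sI by simp
          show ?thesis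
          proof (cases "\<delta> (T k)")
            case (B j)
            then show ?thesis using hitT2[OF Zrb Prb z1] pP T unfolding \<delta>_def by simp
          next
            case (T k')
            have k'i: "k' \<noteq> i" using T di[of "T k"] dTi k4 by auto
            have k'm: "k' \<noteq> m" using T di[of "T k"] i(1) k4 unfolding \<delta>_def by auto
            have k'r: "1 \<le> k' \<and> k' \<le> n"
            proof (cases "k' = k")
              case True then show ?thesis using k4 by simp
            next
              case False then show ?thesis using pt_rng[OF Drb, of "T k" k'] T unfolding \<delta>_def by simp
            qed
            have "pt P (T (\<sigma> k)) = T (\<sigma> k')" using pP T by simp
            moreover have "pt Z (B (\<sigma> k')) = T k'" using ZBo k'r k'i k'm by simp
            ultimately show ?thesis using hitT3[OF Zrb Prb z1] \<open>v = T k\<close> T unfolding \<delta>_def by simp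
          qed
        qed
      qed
    next
      case (B k)
      show ?thesis
      proof (cases "k = m")
        case True
        have "pt P (B m) = T m" "pt Z (B m) = B p" "pt P (T p) = T p" "pt Z (B p) = B m" "pt P (T m) = B m"
          unfolding ptP \<pi>_def ptZ using s1 eB mr by auto
        then show ?thesis using hitB5[OF Zrb Prb] B True b by simp
      next
        case False
        have pP: "pt P (B k) = tm \<sigma> (\<delta> (B k))" unfolding ptP \<pi>_def \<zeta>_def using False by simp
        show ?thesis
        proof (cases "\<delta> (B k)")
          case (B j)
          then show ?thesis using hitB1[OF Zrb Prb] pP \<open>v = vtx.B k\<close> unfolding \<delta>_def by simp
        next
          case (T k')
          have k'i: "k' \<noteq> i" using T di[of "vtx.B k"] dTi by auto
          have k'm: "k' \<noteq> m" using T di[of "vtx.B k"] i(1) unfolding \<delta>_def by auto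
          have k'r: "1 \<le> k' \<and> k' \<le> n" using pt_rng[OF Drb, of "vtx.B k" k'] T unfolding \<delta>_def by simp
          have "pt P (B k) = T (\<sigma> k')" using pP T by simp
          moreover have "pt Z (B (\<sigma> k')) = T k'" using ZBo k'r k'i k'm by simp
          ultimately show ?thesis using hitB2[OF Zrb Prb] \<open>v = vtx.B k\<close> T unfolding \<delta>_def by simp
        qed
      qed
    qed
  qed
  have l1: "loops n Q0 (ee n p) = 0" unfolding Q0_def by (rule permL(2)[OF yrb bs])
  have l2: "loops n Z P = 0"
  proof (rule loops0)
    fix k assume k: "1 \<le> k" "k \<le> n"
    have mB: "pt P (T m) = B m" unfolding ptP \<pi>_def by simp
    show "\<exists>w. conn Z P (Mid k) w \<and> isO w"
    proof (cases "k = m \<or> k = p")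
      case True
      then show ?thesis
      proof
        assume "k = m" then show ?thesis using MB1[OF Zrb Prb mB] isO_def by blast
      next
        assume "k = p"
        have "pt Z (B p) = B m" unfolding ptZ using s1 eB mr by simp
        then have "conn Z P (Mid k) (Mid m)" using MA2[OF Zrb Prb] \<open>k = p\<close> by simp
        then show ?thesis using MB1[OF Zrb Prb mB] conn_trans isO_def by blast
      qed
    next
      case False
      have "pt Z (B k) = T (\<sigma> k)" unfolding ptZ using False k eB by simp
      then show ?thesis using MA1[OF Zrb Prb] isO_def by blast
    qed
  qed
  have PR: "P \<in> Rset p n"
    unfolding Rset_def
  proof (intro CollectI conjI allI impI Prb)
    fix k assume k: "p < k \<and> k \<le> n"
    show "pt P (T k) = B k"
    proof (cases "k = m")
      case True then show ?thesis unfolding ptP \<pi>_def by simp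
    next
      case False
      then have "m < k" using k pm by auto
      then have "pt D (T k) = B k" using RsetD[OF D] k by blast
      moreover have "\<sigma> k = k" unfolding \<sigma>_def sw_def using \<open>m < k\<close> ip pm by auto
      ultimately have "\<zeta> (T k) = B k" unfolding \<zeta>_def \<delta>_def by simp
      then show ?thesis unfolding ptP \<pi>_def using False \<open>m < k\<close> pm by auto
    qed
  qed
  have QR: "Q0 \<in> Rset p n" unfolding Q0_def by (rule permd_Rset[OF bs]) (use ip in \<open>auto simp: \<sigma>_def sw_def\<close>)
  have "dec n p D Q0 (ee n p) P" unfolding dec_def using PR QR yrb l1 l2 ZD unfolding Z_def by simp
  then show ?thesis using p_def by blast
qed



lemma Rset_idx: assumes D: "D \<in> Rset m n" and k: "m < k" "k \<le> n"
  shows "pt D v = T k \<Longrightarrow> v = B k" "pt D v = B k \<Longrightarrow> v = T k"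
proof -
  have Drb: "D \<in> rb n" using Rset_rb[OF D] .
  have iv: "pt D (pt D v) = v" using pt_invol[OF Drb] .
  show "pt D v = T k \<Longrightarrow> v = B k" using RsetD[OF D k] iv by simp
  show "pt D v = B k \<Longrightarrow> v = T k" using RsetD'[OF D k] iv by simp
qed

lemma hor_T: "D \<in> rb n \<Longrightarrow> pt D v = T i \<Longrightarrow> v = T k \<Longrightarrow> i \<noteq> k \<Longrightarrow> hor D"
  using nohor_pt(1) by blast
lemma hor_B: "D \<in> rb n \<Longrightarrow> pt D v = B i \<Longrightarrow> v = B k \<Longrightarrow> i \<noteq> k \<Longrightarrow> hor D"
  using nohor_pt(2) by blast

lemma gg_ne_ee: "gg n p \<noteq> ee n p"
proof
  assume a: "gg n p = ee n p"
  have "{T p, T (p + 1)} \<in> ee n p" unfolding ee_def by blast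
  moreover have "{T p, T (p + 1)} \<notin> gg n p" unfolding gg_def by (auto simp: doubleton_eq_iff)
  ultimately show False using a by simp
qed

lemma decomp: assumes D: "D \<in> Rset m n" and m: "1 \<le> m" "m \<le> n" and nb: "pt D (T m) \<noteq> B m"
  shows "\<exists>P Q y. ((y = gg n (m - 1) \<and> 2 \<le> m) \<or> (y = ee n (m - 1) \<and> 2 \<le> m) \<or> y = uu n m) \<and> dec n (m - 1) D P y Q
     \<and> (\<not> hor D \<longrightarrow> y \<noteq> ee n (m - 1) \<and> \<not> hor P \<and> \<not> hor Q)"
proof -
  have Drb: "D \<in> rb n" using Rset_rb[OF D] .
  have rng: "\<And>v k. pt D v = T k \<Longrightarrow> pt D v \<noteq> v \<Longrightarrow> 1 \<le> k \<and> k \<le> n" using pt_rng[OF Drb] by blast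
  have rngB: "\<And>v k. pt D v = B k \<Longrightarrow> pt D v \<noteq> v \<Longrightarrow> 1 \<le> k \<and> k \<le> n" using pt_rngB[OF Drb] by blast
  show ?thesis
  proof (cases "pt D (T m)")
    case (B j)
    have jr: "1 \<le> j \<and> j \<le> n" using rngB[OF B] B by simp
    have jm: "j \<noteq> m" using nb B by simp
    have "\<not> m < j" using Rset_idx(2)[OF D _ _ B] jr by auto
    then have "j < m" using jm by simp
    then obtain P Q where "dec n (m - 1) D P (gg n (m - 1)) Q" "\<not> hor D \<longrightarrow> \<not> hor P \<and> \<not> hor Q"
      using case_i[OF D m(2) B] jr by blast
    then show ?thesis using gg_ne_ee[of n "m - 1"] \<open>j < m\<close> jr
      by (intro exI[of _ P] exI[of _ Q] exI[of _ "gg n (m - 1)"]) simp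
  next
    case (T t)
    show ?thesis
    proof (cases "pt D (B m)")
      case (T j)
      have jr: "1 \<le> j \<and> j \<le> n" using rng[OF T] T by simp
      have jm: "j \<noteq> m" using T pt_invol[OF Drb, of "B m"] nb by auto
      have "\<not> m < j" using Rset_idx(1)[OF D _ _ T] jr by auto
      then have "j < m" using jm by simp
      then obtain P Q where "dec n (m - 1) D P (gg n (m - 1)) Q" "\<not> hor D \<longrightarrow> \<not> hor P \<and> \<not> hor Q"
        using case_ii[OF D m(2) T] jr by blast
      then show ?thesis using gg_ne_ee[of n "m - 1"] \<open>j < m\<close> jr
      by (intro exI[of _ P] exI[of _ Q] exI[of _ "gg n (m - 1)"]) simp
    next
      case (B j')
      show ?thesis
      proof (cases "j' = m")
        case False
        have jr: "1 \<le> j' \<and> j' \<le> n" using rngB[OF B] B False by simp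
        have "\<not> m < j'" using Rset_idx(2)[OF D _ _ B] jr by auto
        then have "j' < m" using False by simp
        then obtain P Q where "dec n (m - 1) D P (ee n (m - 1)) Q"
          using case_iii[OF D m(2) B _ _ \<open>pt D (T m) = T t\<close>] jr by blast
        moreover have "hor D" using hor_B[OF Drb B refl] False by simp
        moreover have "2 \<le> m" using \<open>j' < m\<close> jr by simp
        ultimately show ?thesis by (intro exI[of _ P] exI[of _ Q] exI[of _ "ee n (m - 1)"]) simp
      next
        case jm: True
        show ?thesis
        proof (cases "t = m")
          case True
          obtain P Q where "dec n (m - 1) D P (uu n m) Q" "\<not> hor D \<longrightarrow> \<not> hor P \<and> \<not> hor Q"
            using case_v[OF D m] \<open>pt D (T m) = T t\<close> True B jm by blast
          moreover have "uu n m \<noteq> ee n (m - 1)"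
          proof
            assume a: "uu n m = ee n (m - 1)"
            have "{T (m - 1), T (m - 1 + 1)} \<in> ee n (m - 1)" unfolding ee_def by blast
            moreover have "{T (m - 1), T (m - 1 + 1)} \<notin> uu n m" unfolding uu_def by (auto simp: doubleton_eq_iff)
            ultimately show False using a by simp
          qed
          ultimately show ?thesis by (intro exI[of _ P] exI[of _ Q] exI[of _ "uu n m"]) simp
        next
          case False
          have tr: "1 \<le> t \<and> t \<le> n" using rng[OF \<open>pt D (T m) = T t\<close>] \<open>pt D (T m) = T t\<close> False by simp
          have "\<not> m < t" using Rset_idx(1)[OF D _ _ \<open>pt D (T m) = T t\<close>] tr by auto
          then have "t < m" using False by simp
          then obtain P Q where "dec n (m - 1) D P (ee n (m - 1)) Q"
            using case_iv[OF D m(2) \<open>pt D (T m) = T t\<close> _ _ ] B jm tr by blast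
          moreover have "hor D" using hor_T[OF Drb \<open>pt D (T m) = T t\<close> refl] False by simp
          moreover have "2 \<le> m" using \<open>t < m\<close> tr by simp
          ultimately show ?thesis by (intro exI[of _ P] exI[of _ Q] exI[of _ "ee n (m - 1)"]) simp
        qed
      qed
    qed
  qed
qed



lemma uu_conj: assumes m: "1 \<le> m" "m \<le> n"
  shows "comp (comp (permd n (sw m n) (sw m n)) (uu n n)) (permd n (sw m n) (sw m n)) = uu n m"
    "loops n (permd n (sw m n) (sw m n)) (uu n n) = 0"
    "loops n (comp (permd n (sw m n) (sw m n)) (uu n n)) (permd n (sw m n) (sw m n)) = 0"
proof -
  define \<sigma> where "\<sigma> = sw m n"
  have bs: "bijs n \<sigma> \<sigma>" unfolding \<sigma>_def by (rule bijs_sw) (use m in auto)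
  define X where "X = comp (permd n \<sigma> \<sigma>) (uu n n)"
  have Xrb: "X \<in> rb n" unfolding X_def by (rule comp_rb[OF permd_rb[OF bs] uu_rb])
  have ptX: "\<And>v. pt X v = tm \<sigma> (piu n n (tm \<sigma> v))" unfolding X_def using permL(1)[OF uu_rb bs] pt_uu by simp
  show "comp (comp (permd n (sw m n) (sw m n)) (uu n n)) (permd n (sw m n) (sw m n)) = uu n m"
    unfolding \<sigma>_def[symmetric] X_def[symmetric]
  proof (rule rb_eqI[OF comp_rb[OF Xrb permd_rb[OF bs]] uu_rb])
    fix v
    have "pt (comp X (permd n \<sigma> \<sigma>)) v = bm \<sigma> (tm \<sigma> (piu n n (tm \<sigma> (bm \<sigma> v))))"
      using permR(1)[OF Xrb bs] ptX by simp
    also have "\<dots> = piu n m v" using m by (cases v) (auto simp: piu_def \<sigma>_def sw_def)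
    finally show "pt (comp X (permd n \<sigma> \<sigma>)) v = pt (uu n m) v" unfolding pt_uu .
  qed
  show "loops n (permd n (sw m n) (sw m n)) (uu n n) = 0" unfolding \<sigma>_def[symmetric] by (rule permL(2)[OF uu_rb bs])
  show "loops n (comp (permd n (sw m n) (sw m n)) (uu n n)) (permd n (sw m n) (sw m n)) = 0"
    unfolding \<sigma>_def[symmetric] X_def[symmetric] by (rule permR(2)[OF Xrb bs])
qed

lemma ee_conj: assumes p: "1 \<le> p" "p + 2 \<le> n"
  shows "comp (comp (permd n (sw p (p+2)) (sw p (p+2))) (ee n (p+1))) (permd n (sw p (p+2)) (sw p (p+2))) = ee n p"
    "loops n (permd n (sw p (p+2)) (sw p (p+2))) (ee n (p+1)) = 0"
    "loops n (comp (permd n (sw p (p+2)) (sw p (p+2))) (ee n (p+1))) (permd n (sw p (p+2)) (sw p (p+2))) = 0"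
proof -
  define \<sigma> where "\<sigma> = sw p (p+2)"
  have bs: "bijs n \<sigma> \<sigma>" unfolding \<sigma>_def by (rule bijs_sw) (use p in auto)
  have erb: "ee n (p+1) \<in> rb n" using ee_rb p by simp
  have erb': "ee n p \<in> rb n" using ee_rb p by simp
  define X where "X = comp (permd n \<sigma> \<sigma>) (ee n (p+1))"
  have Xrb: "X \<in> rb n" unfolding X_def by (rule comp_rb[OF permd_rb[OF bs] erb])
  have ptX: "\<And>v. pt X v = tm \<sigma> (pie n (p+1) (tm \<sigma> v))" unfolding X_def using permL(1)[OF erb bs] pt_ee p by simp
  show "comp (comp (permd n (sw p (p+2)) (sw p (p+2))) (ee n (p+1))) (permd n (sw p (p+2)) (sw p (p+2))) = ee n p"
    unfolding \<sigma>_def[symmetric] X_def[symmetric]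
  proof (rule rb_eqI[OF comp_rb[OF Xrb permd_rb[OF bs]] erb'])
    fix v
    have "pt (comp X (permd n \<sigma> \<sigma>)) v = bm \<sigma> (tm \<sigma> (pie n (p+1) (tm \<sigma> (bm \<sigma> v))))"
      using permR(1)[OF Xrb bs] ptX by simp
    also have "\<dots> = pie n p v" using p by (cases v) (auto simp: pie_def \<sigma>_def sw_def)
    finally show "pt (comp X (permd n \<sigma> \<sigma>)) v = pt (ee n p) v" using pt_ee p by simp
  qed
  show "loops n (permd n (sw p (p+2)) (sw p (p+2))) (ee n (p+1)) = 0" unfolding \<sigma>_def[symmetric] by (rule permL(2)[OF erb bs])
  show "loops n (comp (permd n (sw p (p+2)) (sw p (p+2))) (ee n (p+1))) (permd n (sw p (p+2)) (sw p (p+2))) = 0"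
    unfolding \<sigma>_def[symmetric] X_def[symmetric] by (rule permR(2)[OF Xrb bs])
qed



lemma perm_in: assumes "basis ` perms n \<subseteq> G" "bijs n s s'"
  shows "basis (permd n s s') \<in> subalg x n G"
  using assms permd_perms[OF assms(2)] by (intro subalg.gen) blast

lemma mul3_in: assumes "basis P \<in> subalg x n G" "basis Y \<in> subalg x n G" "basis Q \<in> subalg x n G"
  "P \<in> rb n" "Y \<in> rb n" "Q \<in> rb n" "loops n P Y = 0" "loops n (comp P Y) Q = 0" "comp (comp P Y) Q = D"
  shows "basis D \<in> subalg x n G"
proof -
  have "mult x n (mult x n (basis P) (basis Y)) (basis Q) \<in> subalg x n G"
    using assms(1-3) by (intro subalg.mul)
  moreover have "mult x n (mult x n (basis P) (basis Y)) (basis Q) = basis D"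
    by (rule mult_basis3[OF assms(4-9)])
  ultimately show ?thesis by simp
qed

lemma uu_in: assumes "basis ` perms n \<subseteq> G" "basis (uu n n) \<in> G" "1 \<le> m" "m \<le> n"
  shows "basis (uu n m) \<in> subalg x n G"
proof -
  have bs: "bijs n (sw m n) (sw m n)" by (rule bijs_sw) (use assms in auto)
  show ?thesis
    by (rule mul3_in[OF perm_in[OF assms(1) bs] subalg.gen[OF assms(2)] perm_in[OF assms(1) bs]
          permd_rb[OF bs] uu_rb permd_rb[OF bs] uu_conj(2,3,1)[OF assms(3,4)]])
qed

lemma ee_in: assumes "basis ` perms n \<subseteq> G" "basis (ee n (n - 1)) \<in> G"
  shows "1 \<le> p \<Longrightarrow> p + 1 \<le> n \<Longrightarrow> basis (ee n p) \<in> subalg x n G"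
proof (induction "n - 1 - p" arbitrary: p)
  case 0
  then have "p = n - 1" by simp
  then show ?case using assms(2) by (simp add: subalg.gen)
next
  case (Suc d)
  have IH: "basis (ee n (p + 1)) \<in> subalg x n G" using Suc by simp
  have p2: "p + 2 \<le> n" using Suc by simp
  have bs: "bijs n (sw p (p+2)) (sw p (p+2))" by (rule bijs_sw) (use Suc p2 in auto)
  show ?case
    by (rule mul3_in[OF perm_in[OF assms(1) bs] IH perm_in[OF assms(1) bs]
          permd_rb[OF bs] ee_rb permd_rb[OF bs] ee_conj(2,3,1)[OF Suc(3) p2]]) (use Suc in auto)
qed

lemma Rset0: assumes "D \<in> Rset 0 n" shows "D = idd n"
proof (rule rb_eqI[OF Rset_rb[OF assms]])
  show "idd n \<in> rb n" unfolding idd_eq by (rule permd_rb[OF bijs_id])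
  fix v show "pt D v = pt (idd n) v"
  proof (cases v)
    case (T k)
    then show ?thesis unfolding idd_eq pt_permd[OF bijs_id] pperm_def
      using RsetD[OF assms, of k] pt_out[OF Rset_rb[OF assms], of v] by auto
  next
    case (B k)
    then show ?thesis unfolding idd_eq pt_permd[OF bijs_id] pperm_def
      using RsetD'[OF assms, of k] pt_out[OF Rset_rb[OF assms], of v] by auto
  qed
qed

lemma gen_Rset: assumes PG: "basis ` perms n \<subseteq> G" "basis (uu n n) \<in> G"
  and EE: "\<not> L \<Longrightarrow> (\<forall>p. 1 \<le> p \<longrightarrow> p + 1 \<le> n \<longrightarrow> basis (ee n p) \<in> subalg x n G)"
  shows "m \<le> n \<Longrightarrow> D \<in> Rset m n \<Longrightarrow> (L \<longrightarrow> \<not> hor D) \<Longrightarrow> basis D \<in> subalg x n G"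
proof (induction m arbitrary: D)
  case 0
  then have "D = idd n" using Rset0 by blast
  then show ?case using subalg.one by simp
next
  case (Suc m)
  show ?case
  proof (cases "pt D (T (Suc m)) = B (Suc m)")
    case True
    have "D \<in> Rset m n" unfolding Rset_def
    proof (intro CollectI conjI allI impI)
      show "D \<in> rb n" using Rset_rb[OF Suc(3)] .
      fix k assume k: "m < k \<and> k \<le> n"
      show "pt D (T k) = B k"
      proof (cases "k = Suc m")
        case True then show ?thesis using \<open>pt D (T (Suc m)) = B (Suc m)\<close> by simp
      next
        case False then show ?thesis using RsetD[OF Suc(3)] k by simp
      qed
    qed
    then show ?thesis using Suc by simp
  next
    case False
    obtain P Q y where y: "(y = gg n m \<and> 2 \<le> Suc m) \<or> (y = ee n m \<and> 2 \<le> Suc m) \<or> y = uu n (Suc m)" "dec n m D P y Q"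
      "\<not> hor D \<longrightarrow> y \<noteq> ee n m \<and> \<not> hor P \<and> \<not> hor Q"
      using decomp[OF Suc(3) _ Suc(2) False] by auto
    have d: "P \<in> Rset m n" "Q \<in> Rset m n" "y \<in> rb n" "loops n P y = 0" "loops n (comp P y) Q = 0"
      "comp (comp P y) Q = D" using y(2) unfolding dec_def by auto
    have mn: "m \<le> n" using Suc by simp
    have bP: "basis P \<in> subalg x n G" using Suc.IH[OF mn d(1)] Suc(4) y(3) by blast
    have bQ: "basis Q \<in> subalg x n G" using Suc.IH[OF mn d(2)] Suc(4) y(3) by blast
    have bYy: "basis y \<in> subalg x n G"
    proof -
      consider "y = gg n m" "1 \<le> m" | "y = ee n m" "1 \<le> m" | "y = uu n (Suc m)" using y(1) by auto
      then show ?thesis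
      proof cases
        case 1
        then have m1: "1 \<le> m" by simp
        have bs: "bijs n (sw m (m+1)) (sw m (m+1))" by (rule bijs_sw) (use m1 Suc in auto)
        have "y = permd n (sw m (m+1)) (sw m (m+1))" using gg_eq[of m n] 1 m1 Suc by simp
        then show ?thesis using perm_in[OF PG(1) bs] by simp
      next
        case 2
        then have "\<not> L" using Suc(4) y(3) by blast
        moreover have "1 \<le> m" using 2 by simp
        ultimately show ?thesis using EE 2 Suc by simp
      next
        case 3 then show ?thesis using uu_in[OF PG] Suc by simp
      qed
    qed
    show ?thesis by (rule mul3_in[OF bP bYy bQ Rset_rb[OF d(1)] d(3) Rset_rb[OF d(2)] d(4-6)])
  qed
qed



lemma Rset_nn: "D \<in> rb n \<Longrightarrow> D \<in> Rset n n"
  unfolding Rset_def by auto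

lemma verts_pred: "u \<in> verts n \<Longrightarrow> u \<noteq> T n \<Longrightarrow> u \<noteq> B n \<Longrightarrow> u \<in> verts (n - 1)"
  by (cases u) auto

lemma eps_Rset: assumes n: "1 \<le> n" and P: "P \<in> Rset (n - 1) n"
  shows "P - {{T n, B n}} \<in> rb (n - 1)" "eps n (P - {{T n, B n}}) = P"
proof -
  have Prb: "P \<in> rb n" using Rset_rb[OF P] .
  have pT: "pt P (T n) = B n" using RsetD[OF P] n by simp
  have pB: "pt P (B n) = T n" using pt_invol[OF Prb, of "T n"] pT by simp
  have mem: "{T n, B n} \<in> P" using pt_mem[OF Prb, of "T n"] pT by simp
  show "eps n (P - {{T n, B n}}) = P" unfolding eps_def using mem by auto
  have A: "\<forall>e\<in>P - {{T n, B n}}. \<exists>u v. u \<in> verts (n - 1) \<and> v \<in> verts (n - 1) \<and> u \<noteq> v \<and> e = {u, v}"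
  proof
    fix e assume e: "e \<in> P - {{T n, B n}}"
    obtain u v where uv: "u \<in> verts n" "v \<in> verts n" "u \<noteq> v" "e = {u, v}" using rb_arcD[OF Prb] e by blast
    have pu: "pt P u = v" using pt_arc[OF Prb, of u v] e uv by simp
    have pv: "pt P v = u" using pt_arc[OF Prb, of v u] e uv by (simp add: insert_commute)
    have "u \<noteq> T n" using pu pT e uv by auto
    moreover have "u \<noteq> B n" using pu pB e uv by (auto simp: insert_commute)
    moreover have "v \<noteq> T n" using pv pT e uv by (auto simp: insert_commute)
    moreover have "v \<noteq> B n" using pv pB e uv by auto
    ultimately show "\<exists>u v. u \<in> verts (n - 1) \<and> v \<in> verts (n - 1) \<and> u \<noteq> v \<and> e = {u, v}"
      using verts_pred uv by blast
  qed
  have Bd: "\<forall>e\<in>P - {{T n, B n}}. \<forall>e'\<in>P - {{T n, B n}}. e \<noteq> e' \<longrightarrow> e \<inter> e' = {}"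
    using rb_disj[OF Prb] by blast
  show "P - {{T n, B n}} \<in> rb (n - 1)" unfolding rb_def using A Bd by blast
qed

lemma perms_nohor: "D \<in> perms n \<Longrightarrow> \<not> hor D"
  unfolding perms_def hor_def vertical_arc_def horizontal_arc_def by (auto simp: doubleton_eq_iff)

lemma uu_nohor: "\<not> hor (uu n m)"
  by (rule nohorI[OF uu_rb]) (auto simp: pt_uu piu_def split: if_splits)

theorem lemma3p1:
  fixes x :: "'k::field" and n :: nat
  assumes "n \<ge> 2"
  shows "(\<forall>a\<in>rb n.
            (\<exists>a0\<in>rb (n - 1). a = eps n a0)
          \<or> (\<exists>a'\<in>rb (n - 1). \<exists>b'\<in>rb (n - 1). \<exists>y\<in>{gg n (n - 1), ee n (n - 1), uu n n}.
               (basis a :: diagram \<Rightarrow> 'k) =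
                 mult x n (mult x n (basis (eps n a')) (basis y)) (basis (eps n b'))))
       \<and> subalg x n ((\<lambda>D. basis D) ` perms n \<union> {basis (ee n (n - 1)), basis (uu n n)}) = alg n
       \<and> subalg x n ((\<lambda>D. basis D) ` perms n \<union> {basis (uu n n)}) = lalg n"
proof (intro conjI)
  have n1: "1 \<le> n" using assms by simp
  show "\<forall>a\<in>rb n.
            (\<exists>a0\<in>rb (n - 1). a = eps n a0)
          \<or> (\<exists>a'\<in>rb (n - 1). \<exists>b'\<in>rb (n - 1). \<exists>y\<in>{gg n (n - 1), ee n (n - 1), uu n n}.
               (basis a :: diagram \<Rightarrow> 'k) =
                 mult x n (mult x n (basis (eps n a')) (basis y)) (basis (eps n b')))"
  proof
    fix a assume a: "a \<in> rb n"
    show "(\<exists>a0\<in>rb (n - 1). a = eps n a0)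
          \<or> (\<exists>a'\<in>rb (n - 1). \<exists>b'\<in>rb (n - 1). \<exists>y\<in>{gg n (n - 1), ee n (n - 1), uu n n}.
               (basis a :: diagram \<Rightarrow> 'k) =
                 mult x n (mult x n (basis (eps n a')) (basis y)) (basis (eps n b')))"
    proof (cases "pt a (T n) = B n")
      case True
      have kn: "\<And>k. n - 1 < k \<Longrightarrow> k \<le> n \<Longrightarrow> k = n" by auto
      have "a \<in> Rset (n - 1) n" unfolding Rset_def using a True kn by blast
      then have "a - {{T n, B n}} \<in> rb (n - 1)" "a = eps n (a - {{T n, B n}})" using eps_Rset[OF n1] by auto
      then show ?thesis by blast
    next
      case False
      obtain P Q y where y: "(y = gg n (n - 1) \<and> 2 \<le> n) \<or> (y = ee n (n - 1) \<and> 2 \<le> n) \<or> y = uu n n"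
        "dec n (n - 1) a P y Q"
        using decomp[OF Rset_nn[OF a] n1 order_refl False] by blast
      have d: "P \<in> Rset (n - 1) n" "Q \<in> Rset (n - 1) n" "y \<in> rb n" "loops n P y = 0" "loops n (comp P y) Q = 0"
        "comp (comp P y) Q = a" using y(2) unfolding dec_def by auto
      have yin: "y \<in> {gg n (n - 1), ee n (n - 1), uu n n}" using y(1) by auto
      have e0: "mult x n (mult x n (basis P) (basis y)) (basis Q) = (basis a :: diagram \<Rightarrow> 'k)"
        by (rule mult_basis3[OF Rset_rb[OF d(1)] d(3) Rset_rb[OF d(2)] d(4-6)])
      have e: "(basis a :: diagram \<Rightarrow> 'k) = mult x n (mult x n (basis P) (basis y)) (basis Q)"
        using e0 by (rule sym)
      have "P - {{T n, B n}} \<in> rb (n - 1)" "eps n (P - {{T n, B n}}) = P" using eps_Rset[OF n1 d(1)] by auto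
      moreover have "Q - {{T n, B n}} \<in> rb (n - 1)" "eps n (Q - {{T n, B n}}) = Q" using eps_Rset[OF n1 d(2)] by auto
      ultimately show ?thesis using e yin by metis
    qed
  qed
next
  have n1: "1 \<le> n" "n - 1 + 1 \<le> n" "1 \<le> n - 1" using assms by auto
  let ?G = "(\<lambda>D. basis D) ` perms n \<union> {basis (ee n (n - 1)), basis (uu n n)}"
  show "subalg x n ?G = alg n"
  proof
    have "?G \<subseteq> alg n"
      using basis_alg ee_rb[OF n1(3,2)] uu_rb unfolding perms_def by auto
    then show "subalg x n ?G \<subseteq> alg n" using subalg_alg by blast
  next
    have PG: "basis ` perms n \<subseteq> ?G" "basis (uu n n) \<in> ?G" by auto
    have EE: "\<forall>p. 1 \<le> p \<longrightarrow> p + 1 \<le> n \<longrightarrow> basis (ee n p) \<in> subalg x n ?G"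
      using ee_in[OF PG(1)] by auto
    show "alg n \<subseteq> subalg x n ?G"
    proof
      fix f :: "diagram \<Rightarrow> 'k" assume "f \<in> alg n"
      then show "f \<in> subalg x n ?G"
      proof (rule alg_sub[rotated])
        fix D assume "D \<in> rb n"
        then show "basis D \<in> subalg x n ?G"
          using gen_Rset[OF PG, of False, OF _ order_refl Rset_nn] EE by auto
      qed
    qed
  qed
next
  let ?G = "(\<lambda>D. basis D) ` perms n \<union> {basis (uu n n)}"
  show "subalg x n ?G = lalg n"
  proof
    have "?G \<subseteq> lalg n"
      using basis_lalg perms_nohor uu_rb uu_nohor unfolding perms_def by auto
    then show "subalg x n ?G \<subseteq> lalg n" using subalg_lalg by blast
  next
    have PG: "basis ` perms n \<subseteq> ?G" "basis (uu n n) \<in> ?G" by auto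
    show "lalg n \<subseteq> subalg x n ?G"
    proof
      fix f :: "diagram \<Rightarrow> 'k" assume "f \<in> lalg n"
      then show "f \<in> subalg x n ?G"
      proof (rule lalg_sub[rotated])
        fix D assume "D \<in> rb n" "\<not> hor D"
        then show "basis D \<in> subalg x n ?G"
          using gen_Rset[OF PG, of True, OF _ order_refl Rset_nn] by auto
      qed
    qed
  qed
qed


end
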